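(* Let $Q=Q_{\theta,t}(x)\subset\mathbb{R}^2$ be the boundary of a square centred at $x$ with side length $2t>0$, and let $L_1,\dots,L_4$ be its four sides. Let $u:Q\to\mathbb{S}^1$ be continuous, and set $d:=|\deg(u,Q)|$. For every $s_0\in(0,1)$ there exists $c=c(s_0)>0$, depending only on $s_0$, such that for every $s\in(s_0,1)$, $$\sum_{j=1}^4[u]^2_{H^{\frac{1+s}{2}}(L_j)}\ge c\,\frac{d}{1-s}\,t^{-s}.$$
   Context: For a segment $L\subset\mathbb{R}^2$, $[u]^2_{H^\alpha(L)}:=\iint_{L\times L}\frac{|u(x)-u(y)|^2}{|x-y|^{1+2\alpha}}\,d\mathcal{H}^1(x)\,d\mathcal{H}^1(y)$. $\deg(u,Q)$ is the degree of $u$ on the closed curve $Q$. *)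

theory Defs
  imports "HOL-Complex_Analysis.Complex_Analysis"
begin

text \<open>The plane R^2 is identified with the complex numbers; S^1 = sphere 0 1.\<close>

definition sq_vertex :: "complex \<Rightarrow> real \<Rightarrow> real \<Rightarrow> nat \<Rightarrow> complex" where
  "sq_vertex x theta t k = x + complex_of_real t * cis theta * (\<i> ^ (k mod 4)) * (1 + \<i>)"

definition sq_loop :: "complex \<Rightarrow> real \<Rightarrow> real \<Rightarrow> real \<Rightarrow> complex" where
  "sq_loop x theta t =
     linepath (sq_vertex x theta t 0) (sq_vertex x theta t 1) +++
     linepath (sq_vertex x theta t 1) (sq_vertex x theta t 2) +++
     linepath (sq_vertex x theta t 2) (sq_vertex x theta t 3) +++
     linepath (sq_vertex x theta t 3) (sq_vertex x theta t 0)"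

definition sq_boundary :: "complex \<Rightarrow> real \<Rightarrow> real \<Rightarrow> complex set" where
  "sq_boundary x theta t = (\<Union>k<4. closed_segment (sq_vertex x theta t k) (sq_vertex x theta t (Suc k)))"

definition deg_on_square :: "(complex \<Rightarrow> complex) \<Rightarrow> complex \<Rightarrow> real \<Rightarrow> real \<Rightarrow> complex" where
  "deg_on_square u x theta t = winding_number (u \<circ> sq_loop x theta t) 0"

text \<open>Gagliardo seminorm [u]^2_{H^alpha(L)} on the segment L = [a,b], with the
  1-dimensional Hausdorff measure on L written via the arc-length parametrisation
  r \<mapsto> a + r (b - a), r \<in> [0,1] (Jacobian |b - a|).\<close>
definition seg_seminorm_sq :: "(complex \<Rightarrow> complex) \<Rightarrow> complex \<Rightarrow> complex \<Rightarrow> real \<Rightarrow> ennreal" where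
  "seg_seminorm_sq u a b \<alpha> =
     (\<integral>\<^sup>+ p. indicator ({0..1} \<times> {0..1}) p *
        ennreal ((cmod (u (a + of_real (fst p) * (b - a)) - u (a + of_real (snd p) * (b - a))))\<^sup>2
                 / (cmod (of_real (fst p - snd p) * (b - a))) powr (1 + 2 * \<alpha>)
                 * (cmod (b - a))\<^sup>2)
      \<partial>(lborel \<Otimes>\<^sub>M lborel))"

end

theory Submission
  imports Defs
begin


lemma jensen1:
  fixes f :: "real \<Rightarrow> complex"
  assumes cf: "continuous_on {a..b} f" and ab: "a < b"
  shows "(b-a) * (cmod (integral {a..b} f / of_real (b-a) - c))\<^sup>2 \<le> integral {a..b} (\<lambda>x. (cmod (f x - c))\<^sup>2)"
proof -
  define m where "m = integral {a..b} f / of_real (b-a)"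
  have id: "(cmod (f x - c))\<^sup>2 = (cmod (f x - m))\<^sup>2 + (cmod (m - c))\<^sup>2 + 2 * Re ((f x - m) * cnj (m - c))" for x
  proof -
    have "f x - c = (f x - m) + (m - c)" by simp
    then have "(cmod (f x - c))\<^sup>2 = (cmod ((f x - m) + (m - c)))\<^sup>2" by metis
    also have "\<dots> = (cmod (f x - m))\<^sup>2 + (cmod (m - c))\<^sup>2 + 2 * Re ((f x - m) * cnj (m - c))"
      unfolding cmod_power2 by (simp add: power2_eq_square algebra_simps)
    finally show ?thesis .
  qed
  have i1: "(\<lambda>x. f x - m) integrable_on {a..b}"
    by (intro integrable_continuous_interval continuous_intros cf)
  have i2: "(\<lambda>x. (cmod (f x - m))\<^sup>2) integrable_on {a..b}"
    by (intro integrable_continuous_interval continuous_intros cf)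
  have bl: "bounded_linear (\<lambda>z. 2 * Re (z * cnj (m - c)))"
  proof -
    have "bounded_linear (\<lambda>z. Re (z * cnj (m - c)))"
      by (rule bounded_linear_compose[OF bounded_linear_Re bounded_linear_mult_left])
    then show ?thesis by (rule bounded_linear_compose[OF bounded_linear_mult_right])
  qed
  have i3: "(\<lambda>x. 2 * Re ((f x - m) * cnj (m - c))) integrable_on {a..b}"
    by (intro integrable_continuous_interval continuous_intros cf)
  have "integral {a..b} (\<lambda>x. f x - m) = integral {a..b} f - of_real (b-a) * m"
    using ab by (simp add: integral_diff integrable_continuous_interval cf scaleR_conv_of_real)
  also have "\<dots> = 0" using ab by (simp add: m_def)
  finally have z: "integral {a..b} (\<lambda>x. f x - m) = 0" .
  have i3v: "integral {a..b} (\<lambda>x. 2 * Re ((f x - m) * cnj (m - c))) = 0"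
    using integral_linear[OF i1 bl] z by (simp add: o_def)
  have "integral {a..b} (\<lambda>x. (cmod (f x - c))\<^sup>2) =
        integral {a..b} (\<lambda>x. (cmod (f x - m))\<^sup>2) + (b-a) * (cmod (m - c))\<^sup>2"
  proof -
    have h: "((\<lambda>x. (cmod (f x - m))\<^sup>2 + (cmod (m - c))\<^sup>2 + 2 * Re ((f x - m) * cnj (m - c))) has_integral
       (integral {a..b} (\<lambda>x. (cmod (f x - m))\<^sup>2) + (b-a) *\<^sub>R (cmod (m - c))\<^sup>2 + 0)) {a..b}"
      apply (intro has_integral_add integrable_integral i2)
      using has_integral_const_real[of "(cmod (m - c))\<^sup>2" a b] ab apply simp
      using integrable_integral[OF i3] i3v by simp
    show ?thesis unfolding id using integral_unique[OF h] by simp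
  qed
  moreover have "0 \<le> integral {a..b} (\<lambda>x. (cmod (f x - m))\<^sup>2)"
    by (rule integral_nonneg[OF i2]) simp
  ultimately show ?thesis by (simp add: m_def)
qed

lemma hasint_Ico:
  fixes f :: "real \<Rightarrow> real"
  assumes "(f has_integral I) {a..b}"
  shows "(f has_integral I) {a..<b}"
proof -
  have "negligible {x \<in> {a..b} - {a..<b}. f x \<noteq> 0}"
    by (rule negligible_subset[of "{b}"]) auto
  moreover have "{x \<in> {a..<b} - {a..b}. f x \<noteq> 0} = {}" by auto
  then have "negligible {x \<in> {a..<b} - {a..b}. f x \<noteq> 0}" by (metis negligible_empty)
  ultimately show ?thesis using has_integral_spike_set_eq assms by blast
qed

lemma nn_Ico:
  fixes f :: "real \<Rightarrow> real"
  assumes "continuous_on {a..b} f" "\<And>x. 0 \<le> f x"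
  shows "(\<integral>\<^sup>+x. indicator {a..<b} x * ennreal (f x) \<partial>lborel) = ennreal (integral {a..b} f)"
proof -
  have "(f has_integral integral {a..b} f) {a..<b}"
    by (intro hasint_Ico integrable_integral integrable_continuous_interval assms)
  from nn_integral_has_integral_lebesgue'[OF _ this] assms(2) show ?thesis
    by (simp add: mult.commute)
qed

definition avg :: "(real \<Rightarrow> complex) \<Rightarrow> real \<Rightarrow> real \<Rightarrow> complex" where
  "avg g a b = integral {a..b} g / of_real (b - a)"

lemma jensen2:
  fixes g :: "real \<Rightarrow> complex"
  assumes cg: "continuous_on UNIV g" and ab: "a < b" and cd: "c < d"
  shows "ennreal ((b-a) * (d-c) * (cmod (avg g a b - avg g c d))\<^sup>2) \<le>
    (\<integral>\<^sup>+p. indicator ({a..<b} \<times> {c..<d}) p * ennreal ((cmod (g (fst p) - g (snd p)))\<^sup>2) \<partial>(lborel \<Otimes>\<^sub>M lborel))"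
proof -
  have gm[measurable]: "g \<in> borel_measurable borel"
    using cg by (simp add: borel_measurable_continuous_onI)
  have meas: "(\<lambda>p. indicator ({a..<b} \<times> {c..<d}) p * ennreal ((cmod (g (fst p) - g (snd p)))\<^sup>2))
      \<in> borel_measurable (lborel \<Otimes>\<^sub>M lborel)"
    by measurable
  have inner: "(\<integral>\<^sup>+y. indicator ({a..<b} \<times> {c..<d}) (x, y) * ennreal ((cmod (g x - g y))\<^sup>2) \<partial>lborel)
      = indicator {a..<b} x * ennreal (integral {c..d} (\<lambda>y. (cmod (g y - g x))\<^sup>2))" for x
  proof (cases "x \<in> {a..<b}")
    case True
    have "(\<integral>\<^sup>+y. indicator ({a..<b} \<times> {c..<d}) (x, y) * ennreal ((cmod (g x - g y))\<^sup>2) \<partial>lborel)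
       = (\<integral>\<^sup>+y. indicator {c..<d} y * ennreal ((cmod (g y - g x))\<^sup>2) \<partial>lborel)"
      using True by (intro nn_integral_cong) (auto simp: indicator_def norm_minus_commute)
    also have "\<dots> = ennreal (integral {c..d} (\<lambda>y. (cmod (g y - g x))\<^sup>2))"
      by (rule nn_Ico) (auto intro!: continuous_intros continuous_on_subset[OF cg])
    finally show ?thesis using True by simp
  next
    case False
    then have "(\<lambda>y. indicator ({a..<b} \<times> {c..<d}) (x, y) * ennreal ((cmod (g x - g y))\<^sup>2)) = (\<lambda>y. 0)"
      by (auto simp: indicator_def)
    then show ?thesis using False by simp
  qed
  have j1: "(d-c) * (cmod (avg g c d - g x))\<^sup>2 \<le> integral {c..d} (\<lambda>y. (cmod (g y - g x))\<^sup>2)" for x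
    unfolding avg_def by (rule jensen1) (auto intro: continuous_on_subset[OF cg] cd)
  have "(\<integral>\<^sup>+p. indicator ({a..<b} \<times> {c..<d}) p * ennreal ((cmod (g (fst p) - g (snd p)))\<^sup>2) \<partial>(lborel \<Otimes>\<^sub>M lborel))
      = (\<integral>\<^sup>+x. indicator {a..<b} x * ennreal (integral {c..d} (\<lambda>y. (cmod (g y - g x))\<^sup>2)) \<partial>lborel)"
    using lborel.nn_integral_fst[OF meas] inner by simp
  also have "\<dots> \<ge> (\<integral>\<^sup>+x. indicator {a..<b} x * ennreal ((d-c) * (cmod (g x - avg g c d))\<^sup>2) \<partial>lborel)"
    by (intro nn_integral_mono mult_left_mono ennreal_leI) (use j1 in \<open>auto simp: norm_minus_commute\<close>)
  moreover have "(\<integral>\<^sup>+x. indicator {a..<b} x * ennreal ((d-c) * (cmod (g x - avg g c d))\<^sup>2) \<partial>lborel)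
     = ennreal (integral {a..b} (\<lambda>x. (d-c) * (cmod (g x - avg g c d))\<^sup>2))"
    by (rule nn_Ico) (use cd in \<open>auto intro!: continuous_intros continuous_on_subset[OF cg]\<close>)
  moreover have "integral {a..b} (\<lambda>x. (d-c) * (cmod (g x - avg g c d))\<^sup>2)
      = (d-c) * integral {a..b} (\<lambda>x. (cmod (g x - avg g c d))\<^sup>2)"
    by simp
  moreover have "(b-a) * (cmod (avg g a b - avg g c d))\<^sup>2 \<le> integral {a..b} (\<lambda>x. (cmod (g x - avg g c d))\<^sup>2)"
    unfolding avg_def[of g a b] by (rule jensen1) (auto intro: continuous_on_subset[OF cg] ab)
  ultimately show ?thesis
    using cd by (smt (verit, ccfv_SIG) ennreal_leI mult.assoc mult.commute mult_left_mono order_trans)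
qed

lemma geo_sum:
  fixes X :: real
  assumes "0 < X"
  shows "(\<Sum>n\<le>N. if 2^n < X then (2::real)^n else 0) \<le> 2 * X \<and>
         (\<Sum>n\<le>N. if 2^n < X then (2::real)^n else 0) \<le> 2^(Suc N) - 1"
proof (induction N)
  case 0
  show ?case using assms by (cases "1 < X") simp_all
next
  case (Suc N)
  define S where "S = (\<Sum>n\<le>N. if 2^n < X then (2::real)^n else 0)"
  have e: "(\<Sum>n\<le>Suc N. if 2^n < X then (2::real)^n else 0) = S + (if 2^(Suc N) < X then (2::real)^(Suc N) else 0)"
    unfolding S_def by (rule sum.atMost_Suc)
  have p: "(2::real)^(Suc N) = 2 * 2^N" "(2::real)^(Suc (Suc N)) = 2 * 2^(Suc N)" by simp_all
  have ih: "S \<le> 2 * X" "S \<le> 2^(Suc N) - 1" using Suc unfolding S_def by auto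
  show ?case
  proof (cases "(2::real)^(Suc N) < X")
    case True
    have pos: "(0::real) \<le> 2^N" by simp
    show ?thesis unfolding e using ih p True pos by (simp only: if_True) linarith
  next
    case False
    have pos: "(0::real) \<le> 2^N" by simp
    show ?thesis unfolding e using ih p False pos by (simp only: if_False) linarith
  qed
qed

lemma powr_weight:
  fixes z X q :: real
  assumes "0 < z" "z < X" "1 \<le> q"
  shows "z powr q \<le> X powr (q - 1) * z"
proof -
  have "z powr q = z powr ((q - 1) + 1)" by simp
  also have "\<dots> = z powr (q - 1) * z powr 1" by (rule powr_add)
  also have "\<dots> = z powr (q - 1) * z" using assms by simp
  finally have "z powr q = z powr (q - 1) * z" .
  also have "\<dots> \<le> X powr (q - 1) * z"
    using assms by (intro mult_right_mono powr_mono2) auto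
  finally show ?thesis .
qed

lemma weighted_geo:
  fixes X q :: real
  assumes "0 < X" "1 \<le> q"
  shows "(\<Sum>n\<le>N. if 2^n < X then ((2::real)^n) powr q else 0) \<le> 2 * X powr q"
proof -
  have "(\<Sum>n\<le>N. if 2^n < X then ((2::real)^n) powr q else 0)
      \<le> (\<Sum>n\<le>N. X powr (q - 1) * (if 2^n < X then (2::real)^n else 0))"
    by (intro sum_mono) (use powr_weight[of _ X q] assms in auto)
  also have "\<dots> = X powr (q - 1) * (\<Sum>n\<le>N. if 2^n < X then (2::real)^n else 0)"
    by (simp add: sum_distrib_left)
  also have "\<dots> \<le> X powr (q - 1) * (2 * X)"
    using geo_sum[OF assms(1), of N] by (intro mult_left_mono) auto
  also have "\<dots> = 2 * X powr q"
    using assms by (simp add: powr_add[symmetric] mult.commute[of _ 2] mult.assoc[symmetric] powr_diff)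
  finally show ?thesis .
qed

definition pt :: "real \<Rightarrow> real \<Rightarrow> nat \<Rightarrow> nat \<Rightarrow> real" where
  "pt a l n k = a + real k * (l / 2^n)"

definition cell :: "real \<Rightarrow> real \<Rightarrow> nat \<Rightarrow> nat \<Rightarrow> real set" where
  "cell a l n k = {pt a l n k ..< pt a l n (Suc k)}"

lemma cell_unique:
  assumes "0 < l" "x \<in> cell a l n k" "x \<in> cell a l n k'"
  shows "k = k'"
proof (rule ccontr)
  assume "k \<noteq> k'"
  then consider "Suc k \<le> k'" | "Suc k' \<le> k" by linarith
  then show False
  proof cases
    case 1
    then have "real (Suc k) * (l / 2^n) \<le> real k' * (l / 2^n)"
      using assms by (intro mult_right_mono) auto
    then show False using assms unfolding cell_def pt_def by auto
  next
    case 2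
    then have "real (Suc k') * (l / 2^n) \<le> real k * (l / 2^n)"
      using assms by (intro mult_right_mono) auto
    then show False using assms unfolding cell_def pt_def by auto
  qed
qed

lemma sum_unique_le:
  fixes f :: "nat \<Rightarrow> real"
  assumes "finite K" "\<And>k. k \<in> K \<Longrightarrow> 0 \<le> f k \<and> f k \<le> B" "0 \<le> B"
    "\<And>k k'. k \<in> K \<Longrightarrow> k' \<in> K \<Longrightarrow> f k \<noteq> 0 \<Longrightarrow> f k' \<noteq> 0 \<Longrightarrow> k = k'"
  shows "sum f K \<le> B"
proof (cases "\<exists>k\<in>K. f k \<noteq> 0")
  case True
  then obtain k0 where k0: "k0 \<in> K" "f k0 \<noteq> 0" by blast
  have "sum f K = f k0 + sum f (K - {k0})"
    using assms(1) k0 by (simp add: sum.remove)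
  also have "sum f (K - {k0}) = 0"
    using assms(4)[OF k0(1) _ k0(2)] by (intro sum.neutral) auto
  finally show ?thesis using assms(2)[OF k0(1)] by simp
next
  case False
  then have "sum f K = 0" by (intro sum.neutral) auto
  then show ?thesis using assms by simp
qed

lemma inner_sum_bound:
  fixes x y a l :: real
  assumes l: "0 < l"
  shows "(\<Sum>k<2^n-1. indicator (cell a l n k) x * indicator (cell a l n (Suc k)) y)
          \<le> (if 2^n < 2 * l / (y - x) \<and> x < y then (1::real) else 0)"
proof (rule sum_unique_le)
  fix k :: nat assume "k \<in> {..<2^n-1}"
  show "(0::real) \<le> indicator (cell a l n k) x * indicator (cell a l n (Suc k)) y \<and>
      indicator (cell a l n k) x * indicator (cell a l n (Suc k)) y
      \<le> (if 2^n < 2 * l / (y - x) \<and> x < y then (1::real) else 0)"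
  proof (cases "x \<in> cell a l n k \<and> y \<in> cell a l n (Suc k)")
    case True
    have h: "0 < l / 2^n" using l by simp
    define hh where "hh = l / 2^n"
    have e: "real (Suc (Suc k)) * hh = real k * hh + 2 * hh" "real (Suc k) * hh = real k * hh + hh"
      by (simp_all add: algebra_simps)
    have f: "a + real k * hh \<le> x" "x < a + real (Suc k) * hh" "a + real (Suc k) * hh \<le> y"
       "y < a + real (Suc (Suc k)) * hh"
      using True unfolding cell_def pt_def hh_def by auto
    have xy0: "x < y" "y - x < 2 * hh"
      using f(2,3) apply linarith
      using f(1,4) e(1) by linarith
    then have xy: "x < y" "y - x < 2 * (l / 2^n)" unfolding hh_def by auto
    then have "2^n * (y - x) < 2 * l" by (simp add: field_simps)
    then have "2^n < 2 * l / (y - x)" using xy by (simp add: field_simps)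
    then show ?thesis using True xy by (simp add: indicator_def)
  next
    case False
    then show ?thesis by (auto simp: indicator_def)
  qed
next
  fix k k' :: nat assume "k \<in> {..<2^n-1}" "k' \<in> {..<2^n-1}"
    "indicator (cell a l n k) x * indicator (cell a l n (Suc k)) y \<noteq> (0::real)"
    "indicator (cell a l n k') x * indicator (cell a l n (Suc k')) y \<noteq> (0::real)"
  then have "x \<in> cell a l n k" "x \<in> cell a l n k'"
    by (auto simp: indicator_def split: if_splits)
  then show "k = k'" using cell_unique l by blast
qed auto

lemma pointwise_P:
  fixes x y a l s :: real
  assumes l: "0 < l" and s: "0 \<le> s" "s \<le> 1"
  shows "(\<Sum>n\<le>N. (2^n) powr (2+s) * (\<Sum>k<2^n-1. indicator (cell a l n k) x * indicator (cell a l n (Suc k)) y))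
         * \<bar>x - y\<bar> powr (2+s) \<le> 16 * l powr (2+s)"
proof (cases "x < y")
  case True
  define X where "X = 2 * l / (y - x)"
  have X: "0 < X" using True l by (simp add: X_def)
  have "(\<Sum>n\<le>N. (2^n) powr (2+s) * (\<Sum>k<2^n-1. indicator (cell a l n k) x * indicator (cell a l n (Suc k)) y))
      \<le> (\<Sum>n\<le>N. if 2^n < X then ((2::real)^n) powr (2+s) else 0)"
  proof (intro sum_mono)
    fix n assume "n \<in> {..N}"
    have "(2^n) powr (2+s) * (\<Sum>k<2^n-1. indicator (cell a l n k) x * indicator (cell a l n (Suc k)) y)
      \<le> (2^n) powr (2+s) * (if 2^n < 2 * l / (y - x) \<and> x < y then (1::real) else 0)"
      by (rule mult_left_mono[OF inner_sum_bound[OF l]]) simp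
    note le1 = this
    then show "(2^n) powr (2+s) * (\<Sum>k<2^n-1. indicator (cell a l n k) x * indicator (cell a l n (Suc k)) y)
      \<le> (if 2^n < X then ((2::real)^n) powr (2+s) else 0)"
    proof (cases "2^n < X")
      case True2: True
      then show ?thesis using le1 True unfolding X_def by simp
    next
      case False2: False
      have "(\<Sum>k<2^n-1. indicator (cell a l n k) x * indicator (cell a l n (Suc k)) y) \<le> (0::real)"
        using inner_sum_bound[OF l, where a=a and x=x and y=y and n=n] False2 unfolding X_def by simp
      then have "(2^n) powr (2+s) * (\<Sum>k<2^n-1. indicator (cell a l n k) x * indicator (cell a l n (Suc k)) y) \<le> (0::real)"
        by (simp add: mult_nonneg_nonpos)
      then show ?thesis using False2 by simp
    qed
  qed
  also have "\<dots> \<le> 2 * X powr (2+s)"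
    using weighted_geo[OF X, of "2+s" N] s by simp
  finally have 1: "(\<Sum>n\<le>N. (2^n) powr (2+s) * (\<Sum>k<2^n-1. indicator (cell a l n k) x * indicator (cell a l n (Suc k)) y))
      \<le> 2 * X powr (2+s)" .
  have "2 * X powr (2+s) * \<bar>x - y\<bar> powr (2+s) = 2 * (2 * l) powr (2+s)"
    using True l by (simp add: X_def powr_divide powr_mult abs_if)
  also have "\<dots> = 2 * 2 powr (2+s) * l powr (2+s)" by (simp add: powr_mult)
  also have "\<dots> \<le> 2 * 2 powr 3 * l powr (2+s)"
    using s by (intro mult_right_mono mult_left_mono powr_mono) auto
  also have "\<dots> = 16 * l powr (2+s)" by simp
  finally show ?thesis
    using 1 by (smt (verit, best) mult_right_mono powr_ge_zero)
next
  case False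
  have "\<And>n k. indicator (cell a l n k) x * indicator (cell a l n (Suc k)) y = (0::real)"
  proof -
    fix n k
    show "indicator (cell a l n k) x * indicator (cell a l n (Suc k)) y = (0::real)"
      using False l unfolding cell_def pt_def indicator_def by auto
  qed
  then have "\<And>n. (\<Sum>k<2^n-1. indicator (cell a l n k) x * indicator (cell a l n (Suc k)) y) = (0::real)"
    by (intro sum.neutral) auto
  then show ?thesis using l by simp
qed

definition En :: "(real \<Rightarrow> complex) \<Rightarrow> real \<Rightarrow> real set \<Rightarrow> ennreal" where
  "En g s A = (\<integral>\<^sup>+p. indicator (A \<times> A) p *
      ennreal ((cmod (g (fst p) - g (snd p)))\<^sup>2 / \<bar>fst p - snd p\<bar> powr (2+s)) \<partial>(lborel \<Otimes>\<^sub>M lborel))"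

lemma cell_sub:
  assumes "0 < l" "k < 2^n"
  shows "cell a l n k \<subseteq> {a..<a+l}"
proof -
  have "real k * (l / 2^n) \<ge> 0" using assms by simp
  moreover have "real (Suc k) * (l / 2^n) \<le> real (2^n) * (l / 2^n)"
  proof (intro mult_right_mono)
    have "Suc k \<le> 2^n" using assms by simp
    then show "real (Suc k) \<le> real (2^n)" by (simp only: of_nat_le_iff)
  qed (use assms in simp)
  ultimately show ?thesis unfolding cell_def pt_def using assms by auto
qed

lemma pt_Suc: "pt a l n (Suc k) - pt a l n k = l / 2^n"
  unfolding pt_def of_nat_Suc by (simp add: field_simps)

lemma pt_less: "0 < l \<Longrightarrow> pt a l n k < pt a l n (Suc k)"
proof -
  assume "0 < l"
  then have "0 < l / 2^n" by simp
  then show ?thesis using pt_Suc[of a l n k] by linarith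
qed

lemma weight_eq:
  fixes l s :: real
  assumes "0 < l"
  shows "(2^n) powr (2+s) / (16 * l powr (2+s)) * ((l / 2^n) * (l / 2^n)) = l powr (-s) / 16 * (2^n) powr s"
proof -
  have a: "((2::real)^n) powr (2+s) = (2^n)^2 * (2^n) powr s"
    by (simp add: powr_add powr_numeral)
  have b: "l powr (2+s) = l^2 * l powr s"
    using assms by (simp add: powr_add powr_numeral)
  show ?thesis using assms unfolding a b by (simp add: powr_minus field_simps power2_eq_square)
qed

lemma ennreal_sum2:
  fixes f :: "nat \<Rightarrow> nat \<Rightarrow> real"
  assumes "\<And>n k. 0 \<le> f n k"
  shows "ennreal (\<Sum>n\<in>A. \<Sum>k\<in>B n. f n k) = (\<Sum>n\<in>A. \<Sum>k\<in>B n. ennreal (f n k))"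
  using assms by (simp add: sum_ennreal sum_nonneg)

lemma ennreal_term:
  fixes c G :: real
  assumes "0 \<le> c" "0 \<le> G"
  shows "ennreal (c * (indicator A x * indicator B y) * G) = ennreal c * (indicator (A \<times> B) (x, y) * ennreal G)"
  using assms by (auto simp: indicator_def ennreal_mult)

lemma decomp:
  fixes g :: "real \<Rightarrow> complex"
  assumes cg: "continuous_on UNIV g" and l: "0 < l" and s: "0 \<le> s" "s \<le> 1"
  shows "ennreal (l powr (-s) / 16 * (\<Sum>n\<le>N. (2^n) powr s *
           (\<Sum>k<2^n-1. (cmod (avg g (pt a l n k) (pt a l n (Suc k)) - avg g (pt a l n (Suc k)) (pt a l n (Suc (Suc k)))))\<^sup>2)))
         \<le> En g s {a..<a+l}"
proof -
  have gm[measurable]: "g \<in> borel_measurable borel"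
    using cg by (simp add: borel_measurable_continuous_onI)
  define c where "c n = (2^n) powr (2+s) / (16 * l powr (2+s))" for n :: nat
  define G where "G p = (cmod (g (fst p) - g (snd p)))\<^sup>2" for p :: "real \<times> real"
  define I where "I n k p = indicator (cell a l n k \<times> cell a l n (Suc k)) p * ennreal (G p)" for n k p
  have c0: "0 \<le> c n" for n unfolding c_def by simp
  have Im[measurable]: "I n k \<in> borel_measurable (lborel \<Otimes>\<^sub>M lborel)" for n k
    unfolding I_def G_def cell_def by measurable
  have pw: "(\<Sum>n\<le>N. \<Sum>k<2^n-1. ennreal (c n) * I n k p) \<le>
      indicator ({a..<a+l} \<times> {a..<a+l}) p * ennreal ((cmod (g (fst p) - g (snd p)))\<^sup>2 / \<bar>fst p - snd p\<bar> powr (2+s))" for p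
  proof -
    obtain x y where p: "p = (x, y)" by (cases p)
    have G0: "0 \<le> G p" unfolding G_def by simp
    have "(\<Sum>n\<le>N. \<Sum>k<2^n-1. ennreal (c n) * I n k p) =
      ennreal (\<Sum>n\<le>N. \<Sum>k<2^n-1. c n * (indicator (cell a l n k) x * indicator (cell a l n (Suc k)) y) * G p)"
      unfolding I_def p using c0 G0
      by (subst ennreal_sum2) (auto simp: ennreal_term p)
    also have "\<dots> \<le> indicator ({a..<a+l} \<times> {a..<a+l}) p * ennreal (G p / \<bar>x - y\<bar> powr (2+s))"
    proof (cases "x \<in> {a..<a+l} \<and> y \<in> {a..<a+l} \<and> x \<noteq> y")
      case True
      have r: "0 < \<bar>x - y\<bar> powr (2+s)" using True by simp
      define ii where "ii n k = (indicator (cell a l n k) x * indicator (cell a l n (Suc k)) y :: real)" for n k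
      have "(\<Sum>n\<le>N. \<Sum>k<2^n-1. c n * ii n k * G p)
          = G p / (16 * l powr (2+s)) * (\<Sum>n\<le>N. (2^n) powr (2+s) * (\<Sum>k<2^n-1. ii n k))"
        unfolding c_def sum_distrib_left by (intro sum.cong refl) (simp add: mult_ac)
      also have "\<dots> \<le> G p / (16 * l powr (2+s)) * (16 * l powr (2+s) / \<bar>x - y\<bar> powr (2+s))"
        using pointwise_P[OF l s, where N=N and a=a and x=x and y=y] r G0 l unfolding ii_def
        by (intro mult_left_mono) (simp_all add: field_simps)
      finally have "(\<Sum>n\<le>N. \<Sum>k<2^n-1. c n * (indicator (cell a l n k) x * indicator (cell a l n (Suc k)) y) * G p)
         \<le> G p / (16 * l powr (2+s)) * (16 * l powr (2+s) / \<bar>x - y\<bar> powr (2+s))"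
        unfolding ii_def .
      also have "\<dots> = G p / \<bar>x - y\<bar> powr (2+s)" using l by simp
      finally show ?thesis using True p by (simp add: ennreal_leI)
    next
      case False
      have z: "c n * (indicator (cell a l n k) x * indicator (cell a l n (Suc k)) y) * G p = 0"
        if "k < 2^n - 1" for n k
      proof -
        have "cell a l n k \<subseteq> {a..<a+l}" "cell a l n (Suc k) \<subseteq> {a..<a+l}"
          using that l by (intro cell_sub; simp)+
        moreover have "x \<in> cell a l n k \<Longrightarrow> y \<in> cell a l n (Suc k) \<Longrightarrow> x \<noteq> y"
          unfolding cell_def pt_def using l by auto
        moreover have "x = y \<Longrightarrow> G p = 0" unfolding G_def p by simp
        ultimately show ?thesis using False by (auto simp: indicator_def)
      qed
      show ?thesis by (simp add: z)
    qed
    finally show ?thesis unfolding p G_def by simp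
  qed
  have "(\<Sum>n\<le>N. \<Sum>k<2^n-1. ennreal (c n) * (\<integral>\<^sup>+p. I n k p \<partial>(lborel \<Otimes>\<^sub>M lborel)))
      = (\<integral>\<^sup>+p. (\<Sum>n\<le>N. \<Sum>k<2^n-1. ennreal (c n) * I n k p) \<partial>(lborel \<Otimes>\<^sub>M lborel))"
    by (simp add: nn_integral_sum nn_integral_cmult)
  also have "\<dots> \<le> En g s {a..<a+l}"
    unfolding En_def by (intro nn_integral_mono pw)
  finally have 1: "(\<Sum>n\<le>N. \<Sum>k<2^n-1. ennreal (c n) * (\<integral>\<^sup>+p. I n k p \<partial>(lborel \<Otimes>\<^sub>M lborel))) \<le> En g s {a..<a+l}" .
  have 2: "ennreal (c n * ((l / 2^n) * (l / 2^n) * (cmod (avg g (pt a l n k) (pt a l n (Suc k)) - avg g (pt a l n (Suc k)) (pt a l n (Suc (Suc k)))))\<^sup>2))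
      \<le> ennreal (c n) * (\<integral>\<^sup>+p. I n k p \<partial>(lborel \<Otimes>\<^sub>M lborel))" for n k
  proof -
    have "ennreal ((l / 2^n) * (l / 2^n) * (cmod (avg g (pt a l n k) (pt a l n (Suc k)) - avg g (pt a l n (Suc k)) (pt a l n (Suc (Suc k)))))\<^sup>2)
       \<le> (\<integral>\<^sup>+p. I n k p \<partial>(lborel \<Otimes>\<^sub>M lborel))" (is "ennreal ?X \<le> ?J")
      using jensen2[OF cg pt_less[OF l] pt_less[OF l], of a n k a n "Suc k"]
      unfolding I_def G_def cell_def pt_Suc by simp
    then have "ennreal (c n) * ennreal ?X \<le> ennreal (c n) * ?J" by (rule mult_left_mono) simp
    moreover have "ennreal (c n) * ennreal ?X = ennreal (c n * ?X)" by (rule ennreal_mult[symmetric]) (use c0[of n] in auto)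
    ultimately show ?thesis by simp
  qed
  have "ennreal (l powr (-s) / 16 * (\<Sum>n\<le>N. (2^n) powr s *
           (\<Sum>k<2^n-1. (cmod (avg g (pt a l n k) (pt a l n (Suc k)) - avg g (pt a l n (Suc k)) (pt a l n (Suc (Suc k)))))\<^sup>2)))
      = (\<Sum>n\<le>N. \<Sum>k<2^n-1. ennreal (c n * ((l / 2^n) * (l / 2^n) * (cmod (avg g (pt a l n k) (pt a l n (Suc k)) - avg g (pt a l n (Suc k)) (pt a l n (Suc (Suc k)))))\<^sup>2)))"
  proof -
    have "c n * ((l / 2^n) * (l / 2^n) * X) = l powr (-s) / 16 * ((2^n) powr s * X)" for n X
    proof -
      have w: "c n * ((l / 2^n) * (l / 2^n)) = l powr (-s) / 16 * (2^n) powr s"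
        using weight_eq[OF l, of n s] unfolding c_def .
      show ?thesis using w by (metis mult.assoc)
    qed
    note eq = this
    define Y where "Y n k = (cmod (avg g (pt a l n k) (pt a l n (Suc k)) - avg g (pt a l n (Suc k)) (pt a l n (Suc (Suc k)))))\<^sup>2" for n k
    have "l powr (-s) / 16 * (\<Sum>n\<le>N. (2^n) powr s * (\<Sum>k<2^n-1. Y n k))
        = (\<Sum>n\<le>N. \<Sum>k<2^n-1. c n * ((l / 2^n) * (l / 2^n) * Y n k))"
      by (simp only: eq sum_distrib_left)
    moreover have "ennreal (\<Sum>n\<le>N. \<Sum>k<2^n-1. c n * ((l / 2^n) * (l / 2^n) * Y n k))
        = (\<Sum>n\<le>N. \<Sum>k<2^n-1. ennreal (c n * ((l / 2^n) * (l / 2^n) * Y n k)))"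
      by (rule ennreal_sum2) (use c0 in \<open>auto simp: Y_def\<close>)
    ultimately show ?thesis unfolding Y_def by simp
  qed
  also have "\<dots> \<le> (\<Sum>n\<le>N. \<Sum>k<2^n-1. ennreal (c n) * (\<integral>\<^sup>+p. I n k p \<partial>(lborel \<Otimes>\<^sub>M lborel)))"
    by (intro sum_mono 2)
  finally show ?thesis using 1 by simp
qed

lemma cs_telescope:
  fixes e :: "nat \<Rightarrow> complex"
  shows "(cmod (e K - e 0))\<^sup>2 \<le> real K * (\<Sum>k<K. (cmod (e (Suc k) - e k))\<^sup>2)"
proof -
  have "cmod (e K - e 0) = cmod (\<Sum>k<K. e (Suc k) - e k)"
    by (simp add: sum_lessThan_telescope)
  also have "\<dots> \<le> (\<Sum>k<K. cmod (e (Suc k) - e k))" by (rule norm_sum)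
  finally have 1: "cmod (e K - e 0) \<le> (\<Sum>k<K. cmod (e (Suc k) - e k))" .
  have "(cmod (e K - e 0))\<^sup>2 \<le> (\<Sum>k<K. cmod (e (Suc k) - e k))\<^sup>2"
    using 1 by (intro power_mono) auto
  also have "\<dots> = (\<Sum>k<K. cmod (e (Suc k) - e k) * 1)\<^sup>2" by simp
  also have "\<dots> \<le> (\<Sum>k<K. (cmod (e (Suc k) - e k))\<^sup>2) * (\<Sum>k<K. 1\<^sup>2)"
    by (rule Cauchy_Schwarz_ineq_sum)
  finally show ?thesis by (simp add: mult.commute)
qed

lemma chain_bound:
  fixes e :: "nat \<Rightarrow> complex"
  assumes r: "0 \<le> \<rho>" "\<rho> < 1" and C: "0 \<le> C"
    and step: "\<And>j. cmod (e (Suc j) - e j) \<le> C * \<rho>^(Suc j)"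
    and lim: "\<And>\<epsilon>. \<epsilon> > 0 \<Longrightarrow> \<exists>J. \<forall>j\<ge>J. cmod (e j - z) \<le> \<epsilon>"
  shows "cmod (z - e n) \<le> C * \<rho>^(Suc n) / (1 - \<rho>)"
proof -
  define X where "X = C * \<rho>^(Suc n)"
  have X0: "0 \<le> X" unfolding X_def using r C by simp
  have alg: "X * y + X * (1 - y) / (1 - \<rho>) = X * (1 - \<rho> * y) / (1 - \<rho>)" for y
    using r by (simp add: field_simps)
  have fin: "cmod (e (n + m) - e n) \<le> X * (1 - \<rho>^m) / (1 - \<rho>)" for m
  proof (induction m)
    case 0
    then show ?case by simp
  next
    case (Suc m)
    have st: "cmod (e (n + Suc m) - e (n + m)) \<le> X * \<rho>^m"
    proof -
      have "C * \<rho>^(Suc (n + m)) = X * \<rho>^m" unfolding X_def by (simp add: power_add mult_ac)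
      then show ?thesis using step[of "n + m"] by simp
    qed
    have "cmod (e (n + Suc m) - e n) \<le> X * \<rho>^m + X * (1 - \<rho>^m) / (1 - \<rho>)"
      by (rule norm_diff_triangle_le[OF st Suc])
    also have "\<dots> = X * (1 - \<rho>^(Suc m)) / (1 - \<rho>)" using alg[of "\<rho>^m"] by simp
    finally show ?case .
  qed
  have fin2: "cmod (e (n + m) - e n) \<le> X / (1 - \<rho>)" for m
  proof -
    have "X * (1 - \<rho>^m) \<le> X"
      using r X0 by (simp add: mult_left_le)
    then have "X * (1 - \<rho>^m) / (1 - \<rho>) \<le> X / (1 - \<rho>)"
      using r by (intro divide_right_mono) auto
    then show ?thesis using fin[of m] by linarith
  qed
  show ?thesis unfolding X_def[symmetric]
  proof (rule field_le_epsilon)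
    fix \<epsilon> :: real assume "\<epsilon> > 0"
    then obtain J where J: "\<forall>j\<ge>J. cmod (e j - z) \<le> \<epsilon>" using lim by blast
    have a: "cmod (z - e (n + J)) \<le> \<epsilon>" using J by (simp add: norm_minus_commute)
    show "cmod (z - e n) \<le> X / (1 - \<rho>) + \<epsilon>"
      using norm_diff_triangle_le[OF a fin2[of J]] by simp
  qed
qed

lemma avg_close:
  fixes g :: "real \<Rightarrow> complex"
  assumes cg: "continuous_on UNIV g" and uv: "u < v" and b: "\<And>x. x \<in> {u..v} \<Longrightarrow> cmod (g x - w) \<le> \<epsilon>"
  shows "cmod (avg g u v - w) \<le> \<epsilon>"
proof -
  have e0: "0 \<le> \<epsilon>" using b[of u] uv by (smt (verit) atLeastAtMost_iff norm_ge_zero)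
  have int: "((\<lambda>x. g x - w) has_integral (integral {u..v} g - of_real (v - u) * w)) {u..v}"
  proof -
    have "g integrable_on {u..v}" by (intro integrable_continuous_interval continuous_on_subset[OF cg]) auto
    then have "((\<lambda>x. g x - w) has_integral (integral {u..v} g - (v - u) *\<^sub>R w)) {u..v}"
    proof (intro has_integral_diff integrable_integral)
      show "((\<lambda>x. w) has_integral (v - u) *\<^sub>R w) {u..v}"
        using has_integral_const_real[of w u v] uv by simp
    qed
    then show ?thesis by (simp add: scaleR_conv_of_real)
  qed
  have "cmod (integral {u..v} g - of_real (v - u) * w) \<le> \<epsilon> * measure lborel (cbox u v)"
    using has_integral_bound[OF e0 int[unfolded cbox_interval[symmetric]]] b by (auto simp: cbox_interval)
  then have "cmod (integral {u..v} g - of_real (v - u) * w) \<le> \<epsilon> * (v - u)" using uv by simp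
  moreover have "avg g u v - w = (integral {u..v} g - of_real (v - u) * w) / of_real (v - u)"
    using uv unfolding avg_def by (simp add: field_simps)
  ultimately have "cmod (avg g u v - w) = cmod (integral {u..v} g - of_real (v - u) * w) / (v - u)"
    using uv by (simp add: norm_divide of_real_diff[symmetric] del: of_real_diff)
  also have "\<dots> \<le> \<epsilon>" using \<open>cmod _ \<le> \<epsilon> * (v - u)\<close> uv by (simp add: pos_divide_le_eq)
  finally show ?thesis .
qed

lemma avg_split:
  fixes g :: "real \<Rightarrow> complex"
  assumes cg: "continuous_on UNIV g" and uv: "u < v"
  shows "avg g u v = (avg g u ((u + v) / 2) + avg g ((u + v) / 2) v) / 2"
proof -
  have "integral {u..(u+v)/2} g + integral {(u+v)/2..v} g = integral {u..v} g"
    using uv by (intro Henstock_Kurzweil_Integration.integral_combine integrable_continuous_interval continuous_on_subset[OF cg]) auto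
  moreover have "(u + v) / 2 - u = (v - u) / 2" "v - (u + v) / 2 = (v - u) / 2" by (simp_all add: field_simps)
  ultimately have e: "avg g u ((u + v) / 2) = 2 * integral {u..(u+v)/2} g / of_real (v - u)"
     "avg g ((u + v) / 2) v = 2 * integral {(u+v)/2..v} g / of_real (v - u)"
     "avg g u v = (integral {u..(u+v)/2} g + integral {(u+v)/2..v} g) / of_real (v - u)"
    unfolding avg_def by (simp_all add: field_simps)
  have h: "(2*A/D + 2*B/D)/2 = (A+B)/(D::complex)" for A B D
    by (cases "D = 0") (simp_all add: field_simps)
  show ?thesis unfolding e h ..
qed

lemma pt_double: "pt a l (Suc n) (2 * k) = pt a l n k"
  unfolding pt_def by (simp add: field_simps)

lemma pt_mid: "pt a l (Suc n) (Suc (2 * k)) = (pt a l n k + pt a l n (Suc k)) / 2"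
  unfolding pt_def by (simp add: field_simps)

lemma M_split:
  fixes g :: "real \<Rightarrow> complex"
  assumes cg: "continuous_on UNIV g" and l: "0 < l"
  shows "avg g (pt a l n k) (pt a l n (Suc k)) =
    (avg g (pt a l (Suc n) (2 * k)) (pt a l (Suc n) (Suc (2 * k))) +
     avg g (pt a l (Suc n) (Suc (2 * k))) (pt a l (Suc n) (Suc (Suc (2 * k))))) / 2"
proof -
  have "pt a l (Suc n) (Suc (Suc (2 * k))) = pt a l n (Suc k)"
    using pt_double[of a l n "Suc k"] by simp
  then show ?thesis
    unfolding pt_double pt_mid by (rule ssubst) (rule avg_split[OF cg pt_less[OF l, of a n k]])
qed

lemma powr_r: "((2::real)^n) powr s = exp (s * ln 2) ^ n"
  by (simp add: powr_def ln_realpow exp_of_nat_mult[symmetric] mult_ac)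

lemma xlnx_bound:
  fixes x :: real
  assumes "0 < x"
  shows "- (x * ln x) \<le> 1 - x"
proof -
  have "ln (1/x) \<le> 1/x - 1" using assms by (intro ln_le_minus_one) simp
  then have "- ln x \<le> 1/x - 1" using assms by (simp add: ln_div)
  then have "x * (- ln x) \<le> x * (1/x - 1)" using assms by (intro mult_left_mono) auto
  moreover have "x * (1/x - 1) = 1 - x" using assms by (simp add: field_simps)
  ultimately show ?thesis by linarith
qed

lemma choose_n1:
  fixes s :: real
  assumes "0 < s" "s < 1"
  shows "\<exists>n1. exp (s * ln 2) ^ n1 \<ge> 1 / (1 - s) \<and> (exp (s * ln 2) / 2) ^ n1 \<ge> exp (-1) / 2"
proof -
  define L where "L = ln (1 / (1 - s))"
  have L0: "0 \<le> L" unfolding L_def using assms by simp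
  have ln2: "0 < ln (2::real)" by simp
  define n1 where "n1 = nat \<lceil>L / (s * ln 2)\<rceil>"
  have n1a: "L / (s * ln 2) \<le> real n1" unfolding n1_def by linarith
  have n1b: "real n1 < L / (s * ln 2) + 1"
    unfolding n1_def using L0 assms ln2 by (simp add: divide_nonneg_pos) linarith
  have "exp (s * ln 2) ^ n1 = exp (real n1 * (s * ln 2))" by (simp add: exp_of_nat_mult)
  also have "\<dots> \<ge> exp L"
  proof -
    have "L \<le> real n1 * (s * ln 2)" using n1a assms ln2 by (simp add: field_simps)
    then show ?thesis by simp
  qed
  finally have 1: "exp (s * ln 2) ^ n1 \<ge> 1 / (1 - s)" unfolding L_def using assms by simp
  have "(exp (s * ln 2) / 2) = exp ((s - 1) * ln 2)"
    by (simp add: algebra_simps exp_diff)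
  then have "(exp (s * ln 2) / 2) ^ n1 = exp (real n1 * ((s - 1) * ln 2))" by (simp add: exp_of_nat_mult)
  also have "\<dots> \<ge> exp (-1 - ln 2)"
  proof -
    have "(1 - s) * L \<le> s"
      using xlnx_bound[of "1 - s"] assms unfolding L_def by (simp add: ln_div)
    then have "(1 - s) * L / s \<le> 1" using assms by (simp add: divide_le_eq)
    have "real n1 * ((1 - s) * ln 2) \<le> (L / (s * ln 2) + 1) * ((1 - s) * ln 2)"
      using n1b assms ln2 by (intro mult_right_mono) auto
    also have "\<dots> = (1 - s) * L / s + (1 - s) * ln 2" using assms ln2 by (simp add: field_simps)
    also have "\<dots> \<le> 1 + ln 2" using \<open>(1 - s) * L / s \<le> 1\<close> assms ln2
      by (smt (verit, best) mult_left_le_one_le)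
    finally have "real n1 * ((1 - s) * ln 2) \<le> 1 + ln 2" .
    then show ?thesis by (simp add: algebra_simps)
  qed
  also have "exp (-1 - ln (2::real)) = exp (-1) / 2" by (simp add: exp_diff)
  finally show ?thesis using 1 by blast
qed

lemma choose_M:
  fixes s :: real
  assumes "0 < s" "s < 1"
  shows "\<exists>M. real M * (1 - s) \<ge> 1 \<and> (exp (s * ln 2) / 2) ^ M \<ge> 1 / 4"
proof -
  define M where "M = nat \<lceil>1 / (1 - s)\<rceil>"
  have Ma: "1 / (1 - s) \<le> real M" unfolding M_def by linarith
  have Mb: "real M \<le> 1 / (1 - s) + 1"
  proof -
    have pos: "0 < 1 / (1 - s)" using assms by simp
    then have "-1 < 1 / (1 - s)" by linarith
    then have "0 \<le> \<lceil>1 / (1 - s)\<rceil>" by simp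
    then have "real M = real_of_int \<lceil>1 / (1 - s)\<rceil>" unfolding M_def by simp
    then show ?thesis using of_int_ceiling_le_add_one[of "1 / (1 - s)"] by simp
  qed
  have 1: "real M * (1 - s) \<ge> 1" using Ma assms by (simp add: field_simps)
  have "real M * (1 - s) \<le> (1 / (1 - s) + 1) * (1 - s)" using Mb assms by (intro mult_right_mono) auto
  also have "\<dots> = 2 - s" using assms by (simp add: field_simps)
  finally have 2: "real M * (1 - s) \<le> 2" using assms by simp
  have "(exp (s * ln 2) / 2) = exp ((s - 1) * ln 2)"
    by (simp add: algebra_simps exp_diff)
  then have "(exp (s * ln 2) / 2) ^ M = exp (- (real M * (1 - s)) * ln 2)" by (simp add: exp_of_nat_mult[symmetric] algebra_simps)
  also have "\<dots> \<ge> exp (- 2 * ln 2)" using 2 by (simp add: mult_right_mono)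
  also have "exp (- 2 * ln (2::real)) = 1 / 4"
    by (simp add: exp_minus exp_of_nat_mult[of 2, simplified] power2_eq_square[symmetric])
  finally show ?thesis using 1 by blast
qed

lemma sq_bound:
  fixes x Q b :: real
  assumes "0 \<le> x" "0 < b" "(b^m) * x^2 \<le> Q" 
  shows "x \<le> sqrt Q * (1 / sqrt b)^m"
proof -
  have "sqrt b ^ m * x = sqrt ((b^m) * x^2)"
    using assms by (simp add: real_sqrt_mult real_sqrt_power)
  also have "\<dots> \<le> sqrt Q" using assms by simp
  finally have "sqrt b ^ m * x \<le> sqrt Q" .
  then show ?thesis using assms by (simp add: power_one_over field_simps)
qed

lemma avg_lim:
  fixes g :: "real \<Rightarrow> complex"
  assumes cg: "continuous_on UNIV g" and l: "0 < l"
    and uv: "\<And>j. u j < v j" "\<And>j. v j - u j = l / 2^j" "\<And>j. u j \<le> z \<and> z \<le> v j"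
  shows "\<And>\<epsilon>. \<epsilon> > 0 \<Longrightarrow> \<exists>J. \<forall>j\<ge>J. cmod (avg g (u j) (v j) - g z) \<le> \<epsilon>"
proof -
  fix \<epsilon> :: real assume e: "\<epsilon> > 0"
  have "isCont g z" using cg by (simp add: continuous_on_eq_continuous_at)
  then obtain \<delta> where d: "\<delta> > 0" "\<And>x. dist x z < \<delta> \<Longrightarrow> dist (g x) (g z) < \<epsilon>"
    using e unfolding continuous_at_eps_delta by blast
  obtain J where J: "(1/2::real)^J < \<delta> / l" using real_arch_pow_inv[of "\<delta> / l" "1/2"] d l by auto
  have "\<forall>j\<ge>J. cmod (avg g (u j) (v j) - g z) \<le> \<epsilon>"
  proof (intro allI impI)
    fix j assume "J \<le> j"
    then have "(2::real)^J \<le> 2^j" by (intro power_increasing) auto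
    then have "l / 2^j \<le> l / 2^J" using l by (intro divide_left_mono) auto
    moreover have "l * (1/2)^J < \<delta>" using J l by (simp add: field_simps)
    ultimately have "l / 2^j < \<delta>" by (simp add: power_one_over)
    show "cmod (avg g (u j) (v j) - g z) \<le> \<epsilon>"
    proof (rule avg_close[OF cg uv(1)])
      fix x assume "x \<in> {u j..v j}"
      then have "dist x z < \<delta>" using uv(2,3)[of j] \<open>l / 2^j < \<delta>\<close> by (auto simp: dist_real_def)
      then show "cmod (g x - g z) \<le> \<epsilon>" using d by (simp add: dist_norm less_imp_le)
    qed
  qed
  then show "\<exists>J. \<forall>j\<ge>J. cmod (avg g (u j) (v j) - g z) \<le> \<epsilon>" by blast
qed

definition cL :: "real \<Rightarrow> real" where
  "cL s0 = min ((exp (s0 * ln 2 / 2) - 1)\<^sup>2 / 64) (exp (-1) / 512)"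

lemma cL_pos: "0 < s0 \<Longrightarrow> 0 < cL s0"
  unfolding cL_def by simp

lemma nat_facts:
  "2 * (2^j - 1) = 2^(Suc j) - (2::nat)" "Suc (2^(Suc j) - 2) = 2^(Suc j) - (1::nat)"
  "2^(Suc j) - 2 < 2^(Suc j) - (1::nat)" "(0::nat) < 2^(Suc j) - 1"
proof -
  have "(1::nat) \<le> 2^j" by simp
  then show "2 * (2^j - 1) = 2^(Suc j) - (2::nat)" by (simp add: right_diff_distrib')
  have "(2::nat) \<le> 2^(Suc j)" by (metis one_le_power power_Suc mult_le_mono2 mult.right_neutral le_numeral_extra(4) one_le_numeral)
  then show "Suc (2^(Suc j) - 2) = 2^(Suc j) - (1::nat)" "2^(Suc j) - 2 < 2^(Suc j) - (1::nat)"
    "(0::nat) < 2^(Suc j) - 1" by linarith+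
qed

lemma pt_last: "pt a l j (2^j) = a + l"
  unfolding pt_def by simp

lemma pt_zero: "pt a l j 0 = a"
  unfolding pt_def by simp




lemma pt_right: "pt a l j (2^j - Suc 0) = a + l - l / 2^j"
proof -
  have "Suc (2^j - 1) = 2^j" by simp
  then show ?thesis using pt_Suc[of a l j "2^j - 1"] pt_last[of a l j] by simp
qed

lemma core:
  fixes g :: "real \<Rightarrow> complex"
  assumes cg: "continuous_on UNIV g" and l: "0 < l" and s0: "0 < s0" and s: "s0 \<le> s" "s < 1"
    and gap: "1 \<le> cmod (g (a + l) - g a)"
  shows "ennreal (cL s0 / (1 - s) * l powr (-s)) \<le> En g s {a..<a+l}"
proof (rule ccontr)
  define c where "c = cL s0"
  define T where "T = c / (1 - s) * l powr (-s)"
  have sp: "0 < s" using s s0 by simp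
  have c0: "0 < c" unfolding c_def using cL_pos s0 by simp
  assume "\<not> ennreal (cL s0 / (1 - s) * l powr (-s)) \<le> En g s {a..<a+l}"
  then have lt: "En g s {a..<a+l} < ennreal T" unfolding T_def c_def by simp
  obtain Ir where Ir: "En g s {a..<a+l} = ennreal Ir" "0 \<le> Ir"
    using lt by (cases "En g s {a..<a+l}") auto
  have T0: "0 \<le> T" unfolding T_def using c0 s by simp
  have IrT: "Ir < T" using lt Ir T0 by (simp add: ennreal_less_iff)
  define M where "M n k = avg g (pt a l n k) (pt a l n (Suc k))" for n k
  define A where "A n = (\<Sum>k<2^n-1. (cmod (M n k - M n (Suc k)))\<^sup>2)" for n
  define r where "r = exp (s * ln 2)"
  define Q where "Q = 16 * l powr s * Ir"
  have A0: "0 \<le> A n" for n unfolding A_def by (intro sum_nonneg) simp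
  have r1: "1 < r" unfolding r_def using sp by simp
  have r2: "r < 2"
  proof -
    have "s * ln 2 < 1 * ln (2::real)" using s by (intro mult_strict_right_mono) auto
    then have "exp (s * ln 2) < exp (ln (2::real))" by (intro exp_less_mono) simp
    then show ?thesis unfolding r_def by simp
  qed
  have sumQ: "(\<Sum>n\<le>N. r^n * A n) \<le> Q" for N
  proof -
    have "ennreal (l powr (-s) / 16 * (\<Sum>n\<le>N. (2^n) powr s * A n)) \<le> ennreal Ir"
      using decomp[OF cg l, where s=s and N=N and a=a] Ir sp s unfolding A_def M_def by simp
    then have "l powr (-s) / 16 * (\<Sum>n\<le>N. (2^n) powr s * A n) \<le> Ir"
      using Ir(2) by (simp add: ennreal_le_iff)
    then have "(\<Sum>n\<le>N. (2^n) powr s * A n) \<le> 16 * l powr s * Ir"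
      using l by (simp add: powr_minus field_simps)
    then show ?thesis unfolding Q_def r_def powr_r .
  qed
  have single: "r^n * A n \<le> Q" for n
  proof -
    have "r^n * A n \<le> (\<Sum>m\<le>n. r^m * A m)"
      by (rule member_le_sum[where f="\<lambda>m. r^m * A m"]) (use A0 r1 in auto)
    then show ?thesis using sumQ[of n] by linarith
  qed
  have Q0: "0 \<le> Q" unfolding Q_def using Ir l by simp
  have QT: "Q < 16 * c / (1 - s)"
  proof -
    have "Q < 16 * l powr s * T" unfolding Q_def using IrT l by simp
    also have "\<dots> = (16 * c / (1 - s)) * (l powr s * l powr (-s))" unfolding T_def by (simp add: algebra_simps)
    also have "l powr s * l powr (-s) = 1" using l by (simp add: powr_add[symmetric])
    also have "(16 * c / (1 - s)) * 1 = 16 * c / (1 - s)" by simp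
    finally show ?thesis .
  qed
  define \<rho> where "\<rho> = 1 / sqrt r"
  have \<rho>: "0 < \<rho>" "\<rho> < 1" unfolding \<rho>_def using r1 by auto
  have stepL: "cmod (M (Suc j) 0 - M (Suc j) 1) \<le> sqrt Q * \<rho>^(Suc j)" for j
  proof -
    have "(cmod (M (Suc j) 0 - M (Suc j) (Suc 0)))\<^sup>2 \<le> A (Suc j)"
      unfolding A_def
      by (rule member_le_sum[where f="\<lambda>k. (cmod (M (Suc j) k - M (Suc j) (Suc k)))\<^sup>2"])
         (use nat_facts(4)[of j] in auto)
    then have "r^(Suc j) * (cmod (M (Suc j) 0 - M (Suc j) 1))\<^sup>2 \<le> Q"
      using single[of "Suc j"] r1 by (smt (verit, best) One_nat_def mult_left_mono zero_le_power)
    then show ?thesis unfolding \<rho>_def using r1 by (intro sq_bound) auto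
  qed
  have stepR: "cmod (M (Suc j) (2^(Suc j) - 2) - M (Suc j) (2^(Suc j) - 1)) \<le> sqrt Q * \<rho>^(Suc j)" for j
  proof -
    have "(cmod (M (Suc j) (2^(Suc j) - 2) - M (Suc j) (Suc (2^(Suc j) - 2))))\<^sup>2 \<le> A (Suc j)"
      unfolding A_def
      by (rule member_le_sum[where f="\<lambda>k. (cmod (M (Suc j) k - M (Suc j) (Suc k)))\<^sup>2"])
         (use nat_facts(3)[of j] in auto)
    then have sbq: "r^(Suc j) * (cmod (M (Suc j) (2^(Suc j) - 2) - M (Suc j) (2^(Suc j) - 1)))\<^sup>2 \<le> Q"
      using single[of "Suc j"] r1 nat_facts(2)[of j] by (smt (verit, best) mult_left_mono zero_le_power)
    have "cmod (M (Suc j) (2^(Suc j) - 2) - M (Suc j) (2^(Suc j) - 1)) \<le> sqrt Q * (1 / sqrt r)^(Suc j)"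
      using sq_bound[OF norm_ge_zero _ sbq] r1 by simp
    then show ?thesis unfolding \<rho>_def .
  qed
  have leftB: "cmod (g a - M n 0) \<le> sqrt Q / 2 * \<rho>^(Suc n) / (1 - \<rho>)" for n
  proof (rule chain_bound[where e="\<lambda>j. M j 0"])
    show "0 \<le> \<rho>" "\<rho> < 1" using \<rho> by auto
    show "0 \<le> sqrt Q / 2" using Q0 by simp
    fix j
    have sp: "M j 0 = (M (Suc j) 0 + M (Suc j) 1) / 2"
      using M_split[OF cg l, of a j 0] unfolding M_def by simp
    have eq: "M (Suc j) 0 - M j 0 = (M (Suc j) 0 - M (Suc j) 1) / 2" unfolding sp by (simp add: field_simps)
    have "cmod (M (Suc j) 0 - M j 0) = cmod (M (Suc j) 0 - M (Suc j) 1) / 2"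
      unfolding eq norm_divide by simp
    also have "\<dots> \<le> sqrt Q * \<rho>^(Suc j) / 2" by (rule divide_right_mono[OF stepL]) simp
    finally show "cmod (M (Suc j) 0 - M j 0) \<le> sqrt Q / 2 * \<rho>^(Suc j)" by simp
  next
    fix \<epsilon> :: real assume ep: "\<epsilon> > 0"
    show "\<exists>J. \<forall>j\<ge>J. cmod (M j 0 - g a) \<le> \<epsilon>"
      unfolding M_def
      by (rule avg_lim[OF cg l, where u="\<lambda>j. pt a l j 0" and v="\<lambda>j. pt a l j (Suc 0)" and z=a])
         (use ep l in \<open>auto simp: pt_def\<close>)
  qed
  have rightB: "cmod (g (a + l) - M n (2^n - 1)) \<le> sqrt Q / 2 * \<rho>^(Suc n) / (1 - \<rho>)" for n
  proof (rule chain_bound[where e="\<lambda>j. M j (2^j - 1)"])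
    show "0 \<le> \<rho>" "\<rho> < 1" using \<rho> by auto
    show "0 \<le> sqrt Q / 2" using Q0 by simp
    fix j
    have sp: "M j (2^j - 1) = (M (Suc j) (2^(Suc j) - 2) + M (Suc j) (2^(Suc j) - 1)) / 2"
      using M_split[OF cg l, of a j "2^j - 1"] nat_facts(1,2)[of j] unfolding M_def by simp
    have eq: "M (Suc j) (2^(Suc j) - 1) - M j (2^j - 1) = - (M (Suc j) (2^(Suc j) - 2) - M (Suc j) (2^(Suc j) - 1)) / 2"
      unfolding sp by (simp add: field_simps)
    have "cmod (M (Suc j) (2^(Suc j) - 1) - M j (2^j - 1)) = cmod (M (Suc j) (2^(Suc j) - 2) - M (Suc j) (2^(Suc j) - 1)) / 2"
      unfolding eq norm_divide norm_minus_cancel by simp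
    also have "\<dots> \<le> sqrt Q * \<rho>^(Suc j) / 2" by (rule divide_right_mono[OF stepR]) simp
    finally show "cmod (M (Suc j) (2^(Suc j) - 1) - M j (2^j - 1)) \<le> sqrt Q / 2 * \<rho>^(Suc j)" by simp
  next
    fix \<epsilon> :: real assume "\<epsilon> > 0"
    have e1: "Suc (2^j - 1) = 2^j" for j :: nat by simp
    show "\<exists>J. \<forall>j\<ge>J. cmod (M j (2^j - 1) - g (a + l)) \<le> \<epsilon>"
      unfolding M_def e1
      by (rule avg_lim[OF cg l, where u="\<lambda>j. pt a l j (2^j - 1)" and v="\<lambda>j. pt a l j (2^j)"])
         (use \<open>\<epsilon> > 0\<close> l in \<open>auto simp: pt_right pt_last\<close>)
  qed
  have Wsq: "(cmod (M n (2^n - 1) - M n 0))\<^sup>2 \<le> 2^n * A n" for n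
  proof -
    have "(cmod (M n (2^n - 1) - M n 0))\<^sup>2 \<le> real (2^n - 1) * (\<Sum>k<2^n-1. (cmod (M n (Suc k) - M n k))\<^sup>2)"
      by (rule cs_telescope)
    also have "(\<Sum>k<2^n-1. (cmod (M n (Suc k) - M n k))\<^sup>2) = A n"
      unfolding A_def by (simp add: norm_minus_commute)
    also have "real (2^n - 1) * A n \<le> 2^n * A n"
      using A0[of n] by (intro mult_right_mono) auto
    finally show ?thesis .
  qed
  obtain n1 where n1: "r^n1 \<ge> 1 / (1 - s)" "(r / 2)^n1 \<ge> exp (-1) / 2"
    using choose_n1[OF sp s(2)] unfolding r_def by blast
  obtain Mm where Mm: "real Mm * (1 - s) \<ge> 1" "(r / 2)^Mm \<ge> 1 / 4"
    using choose_M[OF sp s(2)] unfolding r_def by blast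
  define \<beta>0 where "\<beta>0 = exp (s0 * ln 2 / 2)"
  have sr: "sqrt r = exp (s * ln 2 / 2)"
  proof -
    have "r = (exp (s * ln 2 / 2))\<^sup>2" unfolding r_def by (simp add: power2_eq_square exp_add[symmetric])
    then show ?thesis by simp
  qed
  have b0: "1 < \<beta>0" "\<beta>0 \<le> sqrt r" unfolding \<beta>0_def sr using s0 s by auto
  have cb: "sqrt c \<le> (\<beta>0 - 1) / 8"
  proof -
    have "c \<le> ((\<beta>0 - 1) / 8)\<^sup>2" unfolding c_def cL_def \<beta>0_def by (simp add: power_divide)
    then have "sqrt c \<le> sqrt (((\<beta>0 - 1) / 8)\<^sup>2)" by (rule real_sqrt_le_mono)
    then show ?thesis using b0 by simp
  qed
  have small: "sqrt Q * \<rho>^(Suc n) / (1 - \<rho>) \<le> 1 / 2" if "n1 \<le> n" for n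
  proof -
    have rr: "\<rho> / (1 - \<rho>) = 1 / (sqrt r - 1)" unfolding \<rho>_def using r1 by (simp add: field_simps)
    have "\<rho>^n \<le> \<rho>^n1" using \<rho> that by (intro power_decreasing) auto
    also have "\<rho>^n1 = 1 / sqrt (r^n1)" unfolding \<rho>_def by (simp add: power_one_over real_sqrt_power)
    also have "\<dots> \<le> 1 / sqrt (1 / (1 - s))" using n1(1) s r1 by (intro divide_left_mono) auto
    also have "\<dots> = sqrt (1 - s)" using s by (simp add: real_sqrt_divide)
    finally have rn: "\<rho>^n \<le> sqrt (1 - s)" .
    have sq: "sqrt Q \<le> 4 * sqrt c / sqrt (1 - s)"
    proof -
      have "sqrt Q \<le> sqrt (16 * c / (1 - s))" using QT by simp
      also have "\<dots> = 4 * sqrt c / sqrt (1 - s)" using s c0 by (simp add: real_sqrt_mult real_sqrt_divide)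
      finally show ?thesis .
    qed
    have "sqrt Q * \<rho>^(Suc n) / (1 - \<rho>) = sqrt Q * \<rho>^n * (\<rho> / (1 - \<rho>))" by simp
    also have "\<dots> \<le> (4 * sqrt c / sqrt (1 - s)) * sqrt (1 - s) * (1 / (sqrt r - 1))"
      unfolding rr using sq rn \<rho> r1 Q0 c0 s by (intro mult_mono) auto
    also have "\<dots> = 4 * sqrt c / (sqrt r - 1)" using s by simp
    also have "\<dots> \<le> 4 * ((\<beta>0 - 1) / 8) / (\<beta>0 - 1)"
      using cb b0 c0 by (intro frac_le) auto
    also have "\<dots> = 1 / 2" using b0 by simp
    finally show ?thesis .
  qed
  have lowA: "(r / 2)^n / 4 \<le> r^n * A n" if "n1 \<le> n" for n
  proof -
    define E where "E = sqrt Q * \<rho>^(Suc n) / (1 - \<rho>)"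
    have h2: "sqrt Q / 2 * \<rho>^(Suc n) / (1 - \<rho>) = E / 2" unfolding E_def by simp
    have t1: "cmod (g (a + l) - g a) \<le> cmod (g (a + l) - M n (2^n - 1)) + cmod (M n (2^n - 1) - g a)"
      using norm_triangle_ineq[of "g (a + l) - M n (2^n - 1)" "M n (2^n - 1) - g a"] by simp
    have t2: "cmod (M n (2^n - 1) - g a) \<le> cmod (M n (2^n - 1) - M n 0) + cmod (M n 0 - g a)"
      using norm_triangle_ineq[of "M n (2^n - 1) - M n 0" "M n 0 - g a"] by simp
    have t3: "cmod (M n 0 - g a) = cmod (g a - M n 0)" by (rule norm_minus_commute)
    have "1 - E \<le> cmod (M n (2^n - 1) - M n 0)"
      using gap leftB[of n] rightB[of n] t1 t2 t3 unfolding h2 by linarith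
    then have "1 - sqrt Q * \<rho>^(Suc n) / (1 - \<rho>) \<le> cmod (M n (2^n - 1) - M n 0)" unfolding E_def .
    then have "1 / 2 \<le> cmod (M n (2^n - 1) - M n 0)" using small[OF that] by linarith
    then have "(1/2)\<^sup>2 \<le> (cmod (M n (2^n - 1) - M n 0))\<^sup>2" by (intro power_mono) auto
    then have "1 / 4 \<le> 2^n * A n" using Wsq[of n] by (simp add: power2_eq_square)
    then have "r^n * (1/4) \<le> r^n * (2^n * A n)" using r1 by (intro mult_left_mono) auto
    then show ?thesis by (simp add: power_divide field_simps)
  qed
  have "real Mm * ((r / 2)^(n1 + Mm) / 4) \<le> (\<Sum>n\<in>{n1..<n1+Mm}. r^n * A n)"
  proof -
    have "(\<Sum>n\<in>{n1..<n1+Mm}. (r / 2)^(n1 + Mm) / 4) \<le> (\<Sum>n\<in>{n1..<n1+Mm}. r^n * A n)"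
    proof (intro sum_mono)
      fix n assume n: "n \<in> {n1..<n1+Mm}"
      have "(r / 2)^(n1 + Mm) \<le> (r / 2)^n" using n r1 r2 by (intro power_decreasing) auto
      then show "(r / 2)^(n1 + Mm) / 4 \<le> r^n * A n" using lowA[of n] n by simp
    qed
    then show ?thesis by simp
  qed
  also have "\<dots> \<le> (\<Sum>n\<le>n1+Mm. r^n * A n)"
    by (rule sum_mono2) (use A0 r1 in auto)
  also have "\<dots> \<le> Q" by (rule sumQ)
  finally have low: "real Mm * ((r / 2)^(n1 + Mm) / 4) \<le> Q" .
  have "exp (-1) / 32 / (1 - s) \<le> real Mm * ((r / 2)^(n1 + Mm) / 4)"
  proof -
    have "(r / 2)^(n1 + Mm) = (r / 2)^n1 * (r / 2)^Mm" by (simp add: power_add)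
    also have "\<dots> \<ge> (exp (-1) / 2) * (1 / 4)" using n1(2) Mm(2) r1 by (intro mult_mono) auto
    finally have p: "(r / 2)^(n1 + Mm) \<ge> exp (-1) / 8" by simp
    have m: "real Mm \<ge> 1 / (1 - s)" using Mm(1) s by (simp add: field_simps)
    have "exp (-1) / 32 / (1 - s) = (1 / (1 - s)) * ((exp (-1) / 8) / 4)" by simp
    also have "\<dots> \<le> real Mm * ((r / 2)^(n1 + Mm) / 4)"
      using m p s by (intro mult_mono divide_right_mono) auto
    finally show ?thesis .
  qed
  moreover have "16 * c / (1 - s) \<le> exp (-1) / 32 / (1 - s)"
    using s unfolding c_def cL_def by (intro divide_right_mono) auto
  ultimately show False using low QT by linarith
qed



lemma i_pow_mod: "\<i> ^ (n mod 4) = \<i> ^ n"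
proof -
  have "\<i> ^ n = \<i> ^ (4 * (n div 4) + n mod 4)" by (simp only: mult_div_mod_eq)
  also have "\<dots> = (\<i> ^ 4) ^ (n div 4) * \<i> ^ (n mod 4)" by (simp only: power_add power_mult)
  also have "\<i> ^ 4 = (1::complex)" by (simp add: eval_nat_numeral)
  finally show ?thesis by simp
qed

lemma sq_side: "sq_vertex x theta t (Suc k) - sq_vertex x theta t k = - 2 * complex_of_real t * cis theta * \<i> ^ k"
proof -
  have "sq_vertex x theta t (Suc k) - sq_vertex x theta t k
      = complex_of_real t * cis theta * (\<i> ^ Suc k - \<i> ^ k) * (1 + \<i>)"
    unfolding sq_vertex_def i_pow_mod by (simp add: algebra_simps)
  also have "\<dots> = - 2 * complex_of_real t * cis theta * \<i> ^ k"
    by (simp add: algebra_simps)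
  finally show ?thesis .
qed

lemma sq_side_len: "0 < t \<Longrightarrow> cmod (sq_vertex x theta t (Suc k) - sq_vertex x theta t k) = 2 * t"
  unfolding sq_side by (simp add: norm_mult norm_power)

lemma cross_gap:
  assumes "cos d = 0"
  shows "1 \<le> cmod (exp (\<i> * complex_of_real d) - 1)"
proof -
  have "(cmod (exp (\<i> * complex_of_real d) - 1))\<^sup>2 = (cos d - 1)\<^sup>2 + (sin d)\<^sup>2"
    by (simp add: cmod_power2 exp_Euler cos_of_real sin_of_real)
  also have "\<dots> = 2" using assms sin_cos_squared_add[of d] by (simp add: power2_eq_square algebra_simps)
  finally have "(cmod (exp (\<i> * complex_of_real d) - 1))\<^sup>2 = 2" .
  then show ?thesis by (smt (verit) one_le_power power2_eq_square norm_ge_zero mult_le_one)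
qed

lemma crossing:
  fixes \<psi> :: "real \<Rightarrow> real"
  assumes c: "continuous_on {0..1} \<psi>" and h: "0 < h" and D: "\<psi> 0 + real D * h \<le> \<psi> 1"
  shows "\<exists>\<tau>. \<tau> 0 = 0 \<and> (\<forall>k\<le>D. 0 \<le> \<tau> k \<and> \<tau> k \<le> 1 \<and> \<psi> (\<tau> k) = \<psi> 0 + real k * h) \<and> (\<forall>k<D. \<tau> k < \<tau> (Suc k))"
proof -
  have "m \<le> D \<Longrightarrow> \<exists>\<tau>. \<tau> 0 = 0 \<and> (\<forall>k\<le>m. 0 \<le> \<tau> k \<and> \<tau> k \<le> 1 \<and> \<psi> (\<tau> k) = \<psi> 0 + real k * h) \<and> (\<forall>k<m. \<tau> k < \<tau> (Suc k))" for m
  proof (induction m)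
    case 0
    show ?case by (rule exI[of _ "\<lambda>_. 0"]) simp
  next
    case (Suc m)
    then obtain \<tau> where \<tau>: "\<tau> 0 = 0" "\<forall>k\<le>m. 0 \<le> \<tau> k \<and> \<tau> k \<le> 1 \<and> \<psi> (\<tau> k) = \<psi> 0 + real k * h"
      "\<forall>k<m. \<tau> k < \<tau> (Suc k)" by auto
    have tm: "0 \<le> \<tau> m" "\<tau> m \<le> 1" "\<psi> (\<tau> m) = \<psi> 0 + real m * h" using \<tau>(2) by auto
    have "real (Suc m) * h \<le> real D * h" using Suc.prems h by (intro mult_right_mono) auto
    then have le1: "\<psi> 0 + real (Suc m) * h \<le> \<psi> 1" using D by linarith
    have le0: "\<psi> (\<tau> m) \<le> \<psi> 0 + real (Suc m) * h" using tm h by (simp add: algebra_simps)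
    obtain x where x: "\<tau> m \<le> x" "x \<le> 1" "\<psi> x = \<psi> 0 + real (Suc m) * h"
      using IVT'[OF le0 le1 tm(2) continuous_on_subset[OF c]] tm by auto
    have "x \<noteq> \<tau> m" using x(3) tm(3) h by (auto simp: algebra_simps)
    then have xm: "\<tau> m < x" using x(1) by simp
    show ?case
    proof (intro exI[of _ "\<tau>(Suc m := x)"] conjI allI impI)
      show "(\<tau>(Suc m := x)) 0 = 0" using \<tau>(1) by simp
    next
      fix k assume k: "k \<le> Suc m"
      show "0 \<le> (\<tau>(Suc m := x)) k" "(\<tau>(Suc m := x)) k \<le> 1"
        "\<psi> ((\<tau>(Suc m := x)) k) = \<psi> 0 + real k * h"
        using k \<tau>(2) x xm tm by (auto simp: le_Suc_eq)
    next
      fix k assume k: "k < Suc m"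
      show "(\<tau>(Suc m := x)) k < (\<tau>(Suc m := x)) (Suc k)"
        using k \<tau>(3) xm by (auto simp: less_Suc_eq)
    qed
  qed
  then show ?thesis by blast
qed

lemma En_split:
  fixes g :: "real \<Rightarrow> complex"
  assumes cg: "continuous_on UNIV g" and mono: "\<forall>k<D. \<tau> k < \<tau> (Suc k)"
    and rng: "\<forall>k\<le>D. 0 \<le> \<tau> k \<and> \<tau> k \<le> 1"
  shows "(\<Sum>k<D. En g s {\<tau> k..<\<tau> (Suc k)}) \<le> En g s {0..1}"
proof -
  have gm[measurable]: "g \<in> borel_measurable borel"
    using cg by (simp add: borel_measurable_continuous_onI)
  define F where "F p = ennreal ((cmod (g (fst p) - g (snd p)))\<^sup>2 / \<bar>fst p - snd p\<bar> powr (2+s))" for p :: "real \<times> real"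
  have Fm[measurable]: "F \<in> borel_measurable (lborel \<Otimes>\<^sub>M lborel)" unfolding F_def by measurable
  have ml0: "k + m \<le> D \<Longrightarrow> \<tau> k \<le> \<tau> (k + m)" for k m
  proof (induction m)
    case 0 then show ?case by simp
  next
    case (Suc m)
    then have "k + m < D" by simp
    then have "\<tau> (k + m) < \<tau> (Suc (k + m))" using mono by blast
    then show ?case using Suc by simp
  qed
  have ml: "k \<le> k' \<Longrightarrow> k' \<le> D \<Longrightarrow> \<tau> k \<le> \<tau> k'" for k k'
    using ml0[of k "k' - k"] by simp
  have pw: "(\<Sum>k<D. indicator ({\<tau> k..<\<tau> (Suc k)} \<times> {\<tau> k..<\<tau> (Suc k)}) p) \<le> (indicator ({0..1} \<times> {0..1}) p :: real)" for p
  proof (rule sum_unique_le)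
    fix k assume k: "k \<in> {..<D}"
    have "0 \<le> \<tau> k" "\<tau> (Suc k) \<le> 1" using rng k by auto
    then have "{\<tau> k..<\<tau> (Suc k)} \<subseteq> {0..1}" by auto
    then show "0 \<le> (indicator ({\<tau> k..<\<tau> (Suc k)} \<times> {\<tau> k..<\<tau> (Suc k)}) p :: real) \<and>
       (indicator ({\<tau> k..<\<tau> (Suc k)} \<times> {\<tau> k..<\<tau> (Suc k)}) p :: real) \<le> indicator ({0..1} \<times> {0..1}) p"
      by (auto simp: indicator_def)
  next
    fix k k' assume kk: "k \<in> {..<D}" "k' \<in> {..<D}"
      "(indicator ({\<tau> k..<\<tau> (Suc k)} \<times> {\<tau> k..<\<tau> (Suc k)}) p :: real) \<noteq> 0"
      "(indicator ({\<tau> k'..<\<tau> (Suc k')} \<times> {\<tau> k'..<\<tau> (Suc k')}) p :: real) \<noteq> 0"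
    then have in1: "fst p \<in> {\<tau> k..<\<tau> (Suc k)}" "fst p \<in> {\<tau> k'..<\<tau> (Suc k')}"
      by (auto simp: indicator_def split: if_splits)
    show "k = k'"
    proof (rule ccontr)
      assume "k \<noteq> k'"
      then consider "Suc k \<le> k'" | "Suc k' \<le> k" by linarith
      then show False
      proof cases
        case 1 then show False using ml[of "Suc k" k'] in1 kk by auto
      next
        case 2 then show False using ml[of "Suc k'" k] in1 kk by auto
      qed
    qed
  qed auto
  have pw2: "(\<Sum>k<D. indicator ({\<tau> k..<\<tau> (Suc k)} \<times> {\<tau> k..<\<tau> (Suc k)}) p * F p) \<le> indicator ({0..1} \<times> {0..1}) p * F p" for p
  proof -
    define ii where "ii k = (indicator ({\<tau> k..<\<tau> (Suc k)} \<times> {\<tau> k..<\<tau> (Suc k)}) p :: real)" for k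
    have ii0: "0 \<le> ii k" for k unfolding ii_def by simp
    have "(\<Sum>k<D. indicator ({\<tau> k..<\<tau> (Suc k)} \<times> {\<tau> k..<\<tau> (Suc k)}) p * F p)
        = (\<Sum>k<D. ennreal (ii k) * F p)" unfolding ii_def by (simp add: ennreal_indicator)
    also have "\<dots> = (\<Sum>k<D. ennreal (ii k)) * F p" by (rule sum_distrib_right[symmetric])
    also have "\<dots> = ennreal (\<Sum>k<D. ii k) * F p" using ii0 by (simp add: sum_ennreal)
    also have "\<dots> \<le> ennreal (indicator ({0..1} \<times> {0..1}) p) * F p"
      by (intro mult_right_mono ennreal_leI) (use pw[of p] in \<open>simp_all add: ii_def\<close>)
    finally show ?thesis by (simp add: ennreal_indicator)
  qed
  have "(\<Sum>k<D. En g s {\<tau> k..<\<tau> (Suc k)}) =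
      (\<integral>\<^sup>+p. (\<Sum>k<D. indicator ({\<tau> k..<\<tau> (Suc k)} \<times> {\<tau> k..<\<tau> (Suc k)}) p * F p) \<partial>(lborel \<Otimes>\<^sub>M lborel))"
    unfolding En_def F_def[symmetric] by (rule nn_integral_sum[symmetric]) measurable
  also have "\<dots> \<le> En g s {0..1}"
    unfolding En_def F_def[symmetric] by (intro nn_integral_mono pw2)
  finally show ?thesis .
qed

lemma seg_bound:
  fixes u :: "complex \<Rightarrow> complex" and a b :: complex and D :: nat
  assumes cu: "continuous_on (closed_segment a b) u" and us: "u ` closed_segment a b \<subseteq> sphere 0 1"
    and ab: "a \<noteq> b" and s0: "0 < s0" and s: "s0 \<le> s" "s < 1"
    and Dw: "real D \<le> 4 * \<bar>Re (winding_number (u \<circ> linepath a b) 0)\<bar>"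
  shows "ennreal (cL s0 * real D / (1 - s) * cmod (b - a) powr (-s)) \<le> seg_seminorm_sq u a b ((1 + s) / 2)"
proof -
  define L where "L = cmod (b - a)"
  have L0: "0 < L" unfolding L_def using ab by simp
  define g0 where "g0 = u \<circ> linepath a b"
  have cg0: "continuous_on {0..1} g0" unfolding g0_def
    by (rule continuous_on_compose[OF continuous_on_linepath]) (simp add: linepath_image_01 cu)
  have g0s: "x \<in> {0..1} \<Longrightarrow> cmod (g0 x) = 1" for x
    using us linepath_image_01[of a b] unfolding g0_def by (auto simp: image_subset_iff)
  obtain q where cq: "continuous_on {0..1} q" and gq: "\<And>x. x \<in> {0..1} \<Longrightarrow> g0 x = exp (q x)"
    using continuous_logarithm_on_contractible[OF cg0 convex_imp_contractible[OF convex_real_interval(5)]] g0s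
    by (metis norm_zero zero_neq_one)
  have Req: "x \<in> {0..1} \<Longrightarrow> Re (q x) = 0" for x
    using g0s[of x] gq[of x] by (simp add: norm_exp_eq_Re)
  define \<phi> where "\<phi> x = Im (q x)" for x
  have qphi: "x \<in> {0..1} \<Longrightarrow> q x = \<i> * complex_of_real (\<phi> x)" for x
    using Req[of x] unfolding \<phi>_def by (simp add: complex_eq_iff)
  have cphi: "continuous_on {0..1} \<phi>" unfolding \<phi>_def by (intro continuous_intros cq)
  have "winding_number g0 0 = winding_number (exp \<circ> q) 0"
    by (rule winding_number_cong) (simp add: gq)
  also have "\<dots> = (q 1 - q 0) / (2 * of_real pi * \<i>)"
    using winding_number_compose_exp[of q] cq unfolding path_def pathfinish_def pathstart_def by simp
  finally have w: "winding_number g0 0 = (q 1 - q 0) / (2 * of_real pi * \<i>)" .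
  have "q 1 - q 0 = \<i> * complex_of_real (\<phi> 1 - \<phi> 0)"
    using qphi[of 1] qphi[of 0] by (simp add: algebra_simps)
  then have "(q 1 - q 0) / (2 * of_real pi * \<i>) = complex_of_real ((\<phi> 1 - \<phi> 0) / (2 * pi))"
    by simp
  then have "Re (winding_number g0 0) = (\<phi> 1 - \<phi> 0) / (2 * pi)"
    unfolding w by (simp only: Re_complex_of_real)
  then have "\<phi> 1 - \<phi> 0 = 2 * pi * Re (winding_number g0 0)" by simp
  then have aw: "\<bar>\<phi> 1 - \<phi> 0\<bar> = 2 * pi * \<bar>Re (winding_number g0 0)\<bar>" by (simp add: abs_mult)
  have "real D * (pi / 2) \<le> 4 * \<bar>Re (winding_number g0 0)\<bar> * (pi / 2)"
    using Dw unfolding g0_def[symmetric] by (intro mult_right_mono) auto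
  then have Dphi: "real D * (pi / 2) \<le> \<bar>\<phi> 1 - \<phi> 0\<bar>" unfolding aw by simp
  obtain \<sigma> :: real where sig: "\<sigma> = 1 \<or> \<sigma> = -1" "\<sigma> * (\<phi> 1 - \<phi> 0) = \<bar>\<phi> 1 - \<phi> 0\<bar>"
    by (cases "0 \<le> \<phi> 1 - \<phi> 0") (auto intro: that[of 1] that[of "-1"])
  define \<psi> where "\<psi> x = \<sigma> * \<phi> x" for x
  have cpsi: "continuous_on {0..1} \<psi>" unfolding \<psi>_def by (intro continuous_intros cphi)
  have psiD: "\<psi> 0 + real D * (pi / 2) \<le> \<psi> 1" using Dphi sig(2) unfolding \<psi>_def by (simp add: algebra_simps)
  obtain \<tau> where \<tau>: "\<tau> 0 = 0" "\<forall>k\<le>D. 0 \<le> \<tau> k \<and> \<tau> k \<le> 1 \<and> \<psi> (\<tau> k) = \<psi> 0 + real k * (pi / 2)"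
    "\<forall>k<D. \<tau> k < \<tau> (Suc k)"
    using crossing[OF cpsi _ psiD] by auto
  define g where "g x = u (a + complex_of_real (max 0 (min 1 x)) * (b - a))" for x
  have cg: "continuous_on UNIV g"
  proof -
    have "continuous_on UNIV (\<lambda>x::real. a + complex_of_real (max 0 (min 1 x)) * (b - a))"
      by (intro continuous_intros)
    moreover have "(\<lambda>x::real. a + complex_of_real (max 0 (min 1 x)) * (b - a)) ` UNIV \<subseteq> closed_segment a b"
    proof
      fix z assume "z \<in> (\<lambda>x::real. a + complex_of_real (max 0 (min 1 x)) * (b - a)) ` UNIV"
      then obtain x where z: "z = a + complex_of_real (max 0 (min 1 x)) * (b - a)" by auto
      have "z = linepath a b (max 0 (min 1 x))" unfolding z linepath_def by (simp add: scaleR_conv_of_real algebra_simps)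
      then show "z \<in> closed_segment a b" using linepath_image_01[of a b] by auto
    qed
    ultimately show ?thesis unfolding g_def by (rule continuous_on_compose2[OF cu])
  qed
  have gg0: "x \<in> {0..1} \<Longrightarrow> g x = g0 x" for x
    unfolding g_def g0_def linepath_def by (simp add: scaleR_conv_of_real algebra_simps)
  have gap: "1 \<le> cmod (g (\<tau> k + (\<tau> (Suc k) - \<tau> k)) - g (\<tau> k))" if k: "k < D" for k
  proof -
    have r1: "\<tau> k \<in> {0..1}" "\<tau> (Suc k) \<in> {0..1}" using \<tau>(2) k by auto
    have "\<psi> (\<tau> (Suc k)) - \<psi> (\<tau> k) = pi / 2" using \<tau>(2) k by (auto simp: algebra_simps)
    then have dphi: "\<phi> (\<tau> (Suc k)) - \<phi> (\<tau> k) = \<sigma> * (pi / 2)" using sig(1) unfolding \<psi>_def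
      by (auto simp: algebra_simps)
    have "g (\<tau> (Suc k)) - g (\<tau> k) = exp (q (\<tau> k)) * (exp (\<i> * complex_of_real (\<sigma> * (pi / 2))) - 1)"
    proof -
      have "q (\<tau> (Suc k)) = q (\<tau> k) + \<i> * complex_of_real (\<sigma> * (pi / 2))"
      proof -
        have "\<phi> (\<tau> (Suc k)) = \<phi> (\<tau> k) + \<sigma> * (pi / 2)" using dphi by linarith
        then show ?thesis unfolding qphi[OF r1(1)] qphi[OF r1(2)] by (simp only: of_real_add distrib_left)
      qed
      then show ?thesis using gg0 gq r1 by (simp add: exp_add algebra_simps)
    qed
    moreover have "cmod (exp (q (\<tau> k))) = 1" using gq[OF r1(1)] g0s[OF r1(1)] by simp
    moreover have "1 \<le> cmod (exp (\<i> * complex_of_real (\<sigma> * (pi / 2))) - 1)"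
      by (rule cross_gap) (use sig(1) in auto)
    ultimately show ?thesis by (simp add: norm_mult)
  qed
  have each: "ennreal (cL s0 / (1 - s)) \<le> En g s {\<tau> k..<\<tau> (Suc k)}" if k: "k < D" for k
  proof -
    define l where "l = \<tau> (Suc k) - \<tau> k"
    have l0: "0 < l" "l \<le> 1" unfolding l_def using \<tau>(2,3) k by (auto simp: le_Suc_eq) (smt (verit) Suc_leI less_imp_le_nat)
    have "ennreal (cL s0 / (1 - s) * l powr (-s)) \<le> En g s {\<tau> k..<\<tau> k + l}"
      by (rule core[OF cg l0(1) s0 s]) (use gap[OF k] in \<open>simp add: l_def\<close>)
    moreover have "cL s0 / (1 - s) \<le> cL s0 / (1 - s) * l powr (-s)"
    proof -
      have "1 \<le> l powr (-s)" using l0 s s0 powr_mono2'[of "-s" l 1] by simp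
      moreover have "0 \<le> cL s0 / (1 - s)" using cL_pos[OF s0] s by simp
      ultimately have "cL s0 / (1 - s) * 1 \<le> cL s0 / (1 - s) * l powr (-s)" by (intro mult_left_mono)
      then show ?thesis by (simp only: mult_1_right)
    qed
    ultimately show ?thesis unfolding l_def by (smt (verit) ennreal_leI order_trans add_diff_cancel_left')
  qed
  have "ennreal (real D * (cL s0 / (1 - s))) = (\<Sum>k<D. ennreal (cL s0 / (1 - s)))"
  proof -
    have X0: "0 \<le> cL s0 / (1 - s)" using cL_pos[OF s0] s by simp
    have "ennreal (real D * (cL s0 / (1 - s))) = ennreal (real D) * ennreal (cL s0 / (1 - s))"
      by (rule ennreal_mult) (use X0 in auto)
    also have "\<dots> = of_nat D * ennreal (cL s0 / (1 - s))" by (simp add: ennreal_of_nat_eq_real_of_nat)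
    also have "\<dots> = (\<Sum>k<D. ennreal (cL s0 / (1 - s)))" by simp
    finally show ?thesis .
  qed
  also have "\<dots> \<le> (\<Sum>k<D. En g s {\<tau> k..<\<tau> (Suc k)})" by (intro sum_mono each) simp
  also have "\<dots> \<le> En g s {0..1}" by (rule En_split[OF cg \<tau>(3)]) (use \<tau>(2) in auto)
  finally have Ebound: "ennreal (real D * (cL s0 / (1 - s))) \<le> En g s {0..1}" .
  have gm[measurable]: "g \<in> borel_measurable borel"
    using cg by (simp add: borel_measurable_continuous_onI)
  have eqi: "indicator ({0..1} \<times> {0..1}) p *
        ennreal ((cmod (u (a + of_real (fst p) * (b - a)) - u (a + of_real (snd p) * (b - a))))\<^sup>2
                 / (cmod (of_real (fst p - snd p) * (b - a))) powr (1 + 2 * ((1 + s) / 2))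
                 * (cmod (b - a))\<^sup>2)
      = ennreal (L powr (-s)) * (indicator ({0..1} \<times> {0..1}) p *
         ennreal ((cmod (g (fst p) - g (snd p)))\<^sup>2 / \<bar>fst p - snd p\<bar> powr (2+s)))" for p
  proof (cases "p \<in> {0..1} \<times> {0..1}")
    case True
    obtain x y where p: "p = (x, y)" by (cases p)
    have xy: "x \<in> {0..1}" "y \<in> {0..1}" using True p by auto
    have gx: "u (a + of_real x * (b - a)) = g x" "u (a + of_real y * (b - a)) = g y"
      using xy unfolding g_def by auto
    have e1: "1 + 2 * ((1 + s) / 2) = 2 + s" by simp
    have e2: "cmod (of_real (x - y) * (b - a)) = \<bar>x - y\<bar> * L" unfolding L_def norm_mult norm_of_real ..
    have e3: "(\<bar>x - y\<bar> * L) powr (2 + s) = \<bar>x - y\<bar> powr (2 + s) * (L\<^sup>2 * L powr s)"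
      using L0 by (simp add: powr_mult powr_add powr_numeral)
    have e4: "X / (A * (L\<^sup>2 * L powr s)) * L\<^sup>2 = L powr (-s) * (X / A)" for X A :: real
      using L0 by (simp add: powr_minus field_simps)
    have "(cmod (g x - g y))\<^sup>2 / (\<bar>x - y\<bar> * L) powr (2 + s) * L\<^sup>2
        = L powr (-s) * ((cmod (g x - g y))\<^sup>2 / \<bar>x - y\<bar> powr (2+s))"
      unfolding e3 e4 ..
    note main = this
    have "(cmod (u (a + of_real (fst p) * (b - a)) - u (a + of_real (snd p) * (b - a))))\<^sup>2
                 / (cmod (of_real (fst p - snd p) * (b - a))) powr (1 + 2 * ((1 + s) / 2))
                 * (cmod (b - a))\<^sup>2
        = L powr (-s) * ((cmod (g (fst p) - g (snd p)))\<^sup>2 / \<bar>fst p - snd p\<bar> powr (2+s))"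
      unfolding p fst_conv snd_conv gx e1 e2 L_def[symmetric] by (rule main)
    moreover have "ennreal (L powr (-s) * ((cmod (g (fst p) - g (snd p)))\<^sup>2 / \<bar>fst p - snd p\<bar> powr (2+s)))
        = ennreal (L powr (-s)) * ennreal ((cmod (g (fst p) - g (snd p)))\<^sup>2 / \<bar>fst p - snd p\<bar> powr (2+s))"
      by (rule ennreal_mult) auto
    ultimately show ?thesis using True by simp
  next
    case False
    then show ?thesis by simp
  qed
  have "seg_seminorm_sq u a b ((1 + s) / 2) = ennreal (L powr (-s)) * En g s {0..1}"
    unfolding seg_seminorm_sq_def En_def eqi
    by (rule nn_integral_cmult) measurable
  moreover have "ennreal (cL s0 * real D / (1 - s) * cmod (b - a) powr (-s))
      = ennreal (L powr (-s)) * ennreal (real D * (cL s0 / (1 - s)))"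
    unfolding L_def[symmetric] using cL_pos[OF s0] s by (simp add: ennreal_mult''[symmetric] mult_ac)
  ultimately show ?thesis using Ebound by (simp add: mult_left_mono)
qed

lemma seg_facts:
  fixes u :: "complex \<Rightarrow> complex"
  assumes cu: "continuous_on S u" and us: "u ` S \<subseteq> sphere 0 1" and sub: "closed_segment a b \<subseteq> S"
  shows "path (u \<circ> linepath a b)" "0 \<notin> path_image (u \<circ> linepath a b)"
    "pathstart (u \<circ> linepath a b) = u a" "pathfinish (u \<circ> linepath a b) = u b"
    "path_image (u \<circ> linepath a b) \<subseteq> sphere 0 1"
proof -
  show "path (u \<circ> linepath a b)"
    by (rule path_continuous_image) (use continuous_on_subset[OF cu sub] in auto)
  show "path_image (u \<circ> linepath a b) \<subseteq> sphere 0 1"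
    unfolding path_image_compose using us sub by auto
  then show "0 \<notin> path_image (u \<circ> linepath a b)" by auto
  show "pathstart (u \<circ> linepath a b) = u a" "pathfinish (u \<circ> linepath a b) = u b"
    by (simp_all add: pathstart_compose pathfinish_compose)
qed

theorem lemma3p5:
  fixes s0 :: real
  assumes "0 < s0" and "s0 < 1"
  shows "\<exists>c>0. \<forall>(x::complex) (theta::real) (t::real) (u::complex \<Rightarrow> complex) (s::real).
           0 < t \<longrightarrow>
           continuous_on (sq_boundary x theta t) u \<longrightarrow>
           u ` sq_boundary x theta t \<subseteq> sphere 0 1 \<longrightarrow>
           s0 < s \<longrightarrow> s < 1 \<longrightarrow>
           (\<Sum>j<4. seg_seminorm_sq u (sq_vertex x theta t j) (sq_vertex x theta t (Suc j)) ((1 + s) / 2))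
             \<ge> ennreal (c * (\<bar>Re (deg_on_square u x theta t)\<bar> / (1 - s)) * t powr (- s))"
proof (intro exI[of _ "cL s0 / 2"] conjI allI impI)
  show "0 < cL s0 / 2" using cL_pos assms by simp
next
  fix x :: complex and theta t :: real and u :: "complex \<Rightarrow> complex" and s :: real
  assume t: "0 < t" and cu: "continuous_on (sq_boundary x theta t) u"
    and us: "u ` sq_boundary x theta t \<subseteq> sphere 0 1" and s: "s0 < s" "s < 1"
  define V where "V k = sq_vertex x theta t k" for k
  define P where "P j = u \<circ> linepath (V j) (V (Suc j))" for j
  define W where "W j = winding_number (P j) 0" for j
  have V4: "V 4 = V 0" unfolding V_def sq_vertex_def by simp
  have sub: "closed_segment (V j) (V (Suc j)) \<subseteq> sq_boundary x theta t" if "j < 4" for j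
    unfolding sq_boundary_def V_def using that by blast
  note sf = seg_facts[OF cu us sub]
  have Pf: "path (P j)" "0 \<notin> path_image (P j)" "pathstart (P j) = u (V j)" "pathfinish (P j) = u (V (Suc j))"
    if "j < 4" for j
    using sf[OF that] unfolding P_def by auto
  have loop: "u \<circ> sq_loop x theta t = P 0 +++ (P 1 +++ (P 2 +++ P 3))"
    unfolding sq_loop_def P_def path_compose_join V_def
    using V4 unfolding V_def by (simp add: numeral_eq_Suc)
  have j23: "path (P 2 +++ P 3)" "0 \<notin> path_image (P 2 +++ P 3)"
    "winding_number (P 2 +++ P 3) 0 = W 2 + W 3" "pathstart (P 2 +++ P 3) = u (V 2)"
    using Pf[of 2] Pf[of 3] unfolding W_def
    by (auto simp: path_image_join winding_number_join numeral_eq_Suc)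
  have j123: "path (P 1 +++ (P 2 +++ P 3))" "0 \<notin> path_image (P 1 +++ (P 2 +++ P 3))"
    "winding_number (P 1 +++ (P 2 +++ P 3)) 0 = W 1 + W 2 + W 3" "pathstart (P 1 +++ (P 2 +++ P 3)) = u (V 1)"
    using Pf[of 1] j23 unfolding W_def
    by (auto simp: path_image_join winding_number_join numeral_eq_Suc)
  have deg: "deg_on_square u x theta t = W 0 + W 1 + W 2 + W 3"
    and pl: "path (u \<circ> sq_loop x theta t)" "0 \<notin> path_image (u \<circ> sq_loop x theta t)"
    using Pf[of 0] j123 unfolding deg_on_square_def loop W_def
    by (auto simp: path_image_join winding_number_join numeral_eq_Suc)
  have closed: "pathfinish (u \<circ> sq_loop x theta t) = pathstart (u \<circ> sq_loop x theta t)"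
    unfolding pathfinish_compose pathstart_compose sq_loop_def by simp
  have "deg_on_square u x theta t \<in> \<int>"
    unfolding deg_on_square_def using integer_winding_number_eq[OF pl] closed by simp
  then obtain m where m: "deg_on_square u x theta t = of_int m" by (auto elim: Ints_cases)
  define D where "D = nat \<bar>m\<bar>"
  have dD: "\<bar>Re (deg_on_square u x theta t)\<bar> = real D" unfolding m D_def by simp
  have "real D \<le> \<bar>Re (W 0)\<bar> + \<bar>Re (W 1)\<bar> + \<bar>Re (W 2)\<bar> + \<bar>Re (W 3)\<bar>"
    unfolding dD[symmetric] deg by simp
  then obtain j where j: "j < 4" "real D \<le> 4 * \<bar>Re (W j)\<bar>"
  proof -
    assume h: "\<And>j. j < 4 \<Longrightarrow> real D \<le> 4 * \<bar>Re (W j)\<bar> \<Longrightarrow> thesis"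
    show thesis
    proof (rule ccontr)
      assume "\<not> thesis"
      then have "4 * \<bar>Re (W j)\<bar> < real D" if "j < 4" for j using h that by fastforce
      from this[of 0] this[of 1] this[of 2] this[of 3]
      show False using \<open>real D \<le> _\<close> by simp
    qed
  qed
  have Vne: "V j \<noteq> V (Suc j)" and Vlen: "cmod (V (Suc j) - V j) = 2 * t"
    using sq_side_len[OF t, of x theta j] t unfolding V_def by auto
  have sb: "ennreal (cL s0 * real D / (1 - s) * cmod (V (Suc j) - V j) powr (-s))
      \<le> seg_seminorm_sq u (V j) (V (Suc j)) ((1 + s) / 2)"
    by (rule seg_bound[OF continuous_on_subset[OF cu sub[OF j(1)]]])
       (use us sub[OF j(1)] Vne assms s j(2) in \<open>auto simp: W_def P_def\<close>)
  have "seg_seminorm_sq u (V j) (V (Suc j)) ((1 + s) / 2)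
      \<le> (\<Sum>j<4. seg_seminorm_sq u (V j) (V (Suc j)) ((1 + s) / 2))"
    by (rule member_le_sum[where f="\<lambda>j. seg_seminorm_sq u (V j) (V (Suc j)) ((1 + s) / 2)"]) (use j in auto)
  moreover have "cL s0 / 2 * (\<bar>Re (deg_on_square u x theta t)\<bar> / (1 - s)) * t powr (- s)
      \<le> cL s0 * real D / (1 - s) * cmod (V (Suc j) - V j) powr (-s)"
  proof -
    have "(2 * t) powr (-s) = 2 powr (-s) * t powr (-s)" using t by (simp add: powr_mult)
    moreover have "1 / 2 \<le> (2::real) powr (-s)"
    proof -
      have "(2::real) powr (-1) \<le> 2 powr (-s)" using s by (intro powr_mono) auto
      then show ?thesis by (simp add: powr_minus)
    qed
    moreover have "0 \<le> cL s0 * real D / (1 - s) * t powr (-s)" using cL_pos[OF assms(1)] s by simp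
    ultimately have "cL s0 * real D / (1 - s) * t powr (-s) * (1 / 2)
        \<le> cL s0 * real D / (1 - s) * t powr (-s) * 2 powr (-s)"
      by (intro mult_left_mono) auto
    then show ?thesis unfolding Vlen dD \<open>(2 * t) powr (-s) = _\<close> by (simp add: mult_ac)
  qed
  ultimately show "(\<Sum>j<4. seg_seminorm_sq u (sq_vertex x theta t j) (sq_vertex x theta t (Suc j)) ((1 + s) / 2))
             \<ge> ennreal (cL s0 / 2 * (\<bar>Re (deg_on_square u x theta t)\<bar> / (1 - s)) * t powr (- s))"
    using sb unfolding V_def by (meson ennreal_leI order_trans)
qed

end
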